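(* Let $T>0$ and let $E,B:[0,T]\times\mathbb R^3\to\mathbb R^3$ satisfy $\sup_{t\in[0,T]}\|(E,B)(t)\|_{W^{1,\infty}(\mathbb R^3)}\le C_0$ with $C_0$ independent of $\mathfrak c$ and $\varepsilon$. For $(t,x,p)$ let $(X(\tau),P(\tau))=(X(\tau;t,x,p),P(\tau;t,x,p))$ solve $$\frac{dX}{d\tau}=\hat P(\tau),\qquad \frac{dP}{d\tau}=-E(\tau,X(\tau))-\frac{P(\tau)}{P^0(\tau)}\times B(\tau,X(\tau)),\qquad X(t)=x,\ P(t)=p.$$ Then there exists a small constant $\bar T\in[0,T]$, independent of $\mathfrak c$ and $\varepsilon$, such that for $0\le\tau\le t\le\bar T$, $$\frac{\mathfrak c^5}{2(p^0)^5}|t-\tau|^3\lesssim\Big|\det\Big(\frac{\partial X(\tau)}{\partial p}\Big)\Big|\lesssim\frac{2\mathfrak c^5}{(p^0)^5}|t-\tau|^3.$$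
   Context: $\mathfrak c\ge1$ is the speed of light, $\varepsilon\in(0,1)$ a parameter; for $P\in\mathbb R^3$, $P^0=\sqrt{\mathfrak c^2+|P|^2}$ and $\hat P=\mathfrak cP/P^0$; $p^0=\sqrt{\mathfrak c^2+|p|^2}$. *)

theory Defs
  imports "HOL-Analysis.Analysis"
begin

definition pzero :: "real \<Rightarrow> real^3 \<Rightarrow> real" where
  "pzero c P = sqrt (c\<^sup>2 + (norm P)\<^sup>2)"

definition phat :: "real \<Rightarrow> real^3 \<Rightarrow> real^3" where
  "phat c P = (c / pzero c P) *\<^sub>R P"

definition W1inf_field ::
  "real \<Rightarrow> real \<Rightarrow> (real \<Rightarrow> real^3 \<Rightarrow> real^3) \<Rightarrow> (real \<Rightarrow> real^3 \<Rightarrow> real^3^3) \<Rightarrow> bool" where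
  "W1inf_field T C0 F DF \<longleftrightarrow>
     continuous_on ({0..T} \<times> UNIV) (\<lambda>(t, x). F t x) \<and>
     continuous_on ({0..T} \<times> UNIV) (\<lambda>(t, x). DF t x) \<and>
     (\<forall>t\<in>{0..T}. \<forall>x. (F t has_derivative (\<lambda>h. DF t x *v h)) (at x)) \<and>
     (\<forall>t\<in>{0..T}. \<forall>x. norm (F t x) + norm (DF t x) \<le> C0)"

definition is_characteristic_flow ::
  "real \<Rightarrow> real \<Rightarrow> (real \<Rightarrow> real^3 \<Rightarrow> real^3) \<Rightarrow> (real \<Rightarrow> real^3 \<Rightarrow> real^3)
   \<Rightarrow> (real \<Rightarrow> real^3 \<Rightarrow> real^3 \<Rightarrow> real \<Rightarrow> real^3)
   \<Rightarrow> (real \<Rightarrow> real^3 \<Rightarrow> real^3 \<Rightarrow> real \<Rightarrow> real^3) \<Rightarrow> bool" where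
  "is_characteristic_flow c T E B X P \<longleftrightarrow>
     (\<forall>t\<in>{0..T}. \<forall>x p.
        X t x p t = x \<and> P t x p t = p \<and>
        (\<forall>s\<in>{0..T}.
           (X t x p has_vector_derivative phat c (P t x p s)) (at s within {0..T}) \<and>
           (P t x p has_vector_derivative
              (- E s (X t x p s)
               - cross3 ((1 / pzero c (P t x p s)) *\<^sub>R P t x p s) (B s (X t x p s))))
             (at s within {0..T})))"

end

theory Submission
  imports Defs
begin


lemma pzero_sq: "(pzero c P)\<^sup>2 = c\<^sup>2 + (norm P)\<^sup>2"
  unfolding pzero_def by simp

lemma pzero_ge: "c \<ge> 0 \<Longrightarrow> pzero c P \<ge> c"
  unfolding pzero_def by (simp add: real_le_rsqrt)

lemma pzero_ge_norm: "norm P \<le> pzero c P"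
  unfolding pzero_def by (simp add: real_le_rsqrt)

lemma pzero_pos: "c > 0 \<Longrightarrow> pzero c P > 0"
  using pzero_ge[of c P] by linarith

lemma pzero_lip: "\<bar>pzero c P - pzero c Q\<bar> \<le> norm (P - Q)"
proof -
  have e: "pzero c X = norm (c, X)" for X
    unfolding pzero_def norm_Pair by simp
  have "\<bar>norm (c, P) - norm (c, Q)\<bar> \<le> norm ((c, P) - (c, Q))"
    by (rule norm_triangle_ineq3)
  also have "norm ((c, P) - (c, Q)) = norm (P - Q)" by (simp add: norm_Pair)
  finally show ?thesis by (simp add: e)
qed

definition Gm :: "real \<Rightarrow> real^3 \<Rightarrow> real^3 \<Rightarrow> real^3" where
  "Gm c P d = (c / pzero c P) *\<^sub>R d - (c * (P \<bullet> d) / pzero c P ^ 3) *\<^sub>R P"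

lemma Gm_alt: "Gm c P d = (c / pzero c P) *\<^sub>R d - (P \<bullet> d) *\<^sub>R ((c / pzero c P ^ 3) *\<^sub>R P)"
  unfolding Gm_def by (simp add: field_simps)

lemma linear_Gm: "linear (Gm c P)"
proof -
  have "bounded_linear (\<lambda>d. (c / pzero c P) *\<^sub>R d - (P \<bullet> d) *\<^sub>R ((c / pzero c P ^ 3) *\<^sub>R P))"
    by (intro bounded_linear_intros)
  then show ?thesis unfolding Gm_alt[abs_def] by (simp add: bounded_linear.linear)
qed

lemma phat_deriv:
  assumes "c > 0"
  shows "(phat c has_derivative Gm c P) (at P)"
proof -
  have pz: "pzero c P > 0" using pzero_pos[OF assms] .
  have d1: "((\<lambda>Q. c\<^sup>2 + (norm Q)\<^sup>2) has_derivative (\<lambda>d. 2 * (P \<bullet> d))) (at P)"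
    by (auto intro!: derivative_eq_intros simp: power2_norm_eq_inner fun_eq_iff inner_commute)
  have "((\<lambda>Q. pzero c Q) has_derivative (\<lambda>d. (P \<bullet> d) / pzero c P)) (at P)"
    unfolding pzero_def
    using pz unfolding pzero_def
    by (auto intro!: derivative_eq_intros d1 simp: power2_norm_eq_inner fun_eq_iff inner_commute field_simps)
  then have d2: "((\<lambda>Q. c / pzero c Q) has_derivative (\<lambda>d. - (c * (P \<bullet> d) / pzero c P ^ 3))) (at P)"
    using pz
    by (auto intro!: derivative_eq_intros simp: field_simps power2_eq_square power3_eq_cube)
  have "((\<lambda>Q. (c / pzero c Q) *\<^sub>R Q) has_derivative
      (\<lambda>d. (c / pzero c P) *\<^sub>R d + (- (c * (P \<bullet> d) / pzero c P ^ 3)) *\<^sub>R P)) (at P)"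
    by (rule has_derivative_scaleR[OF d2 has_derivative_ident])
  then show ?thesis
    unfolding phat_def[abs_def] Gm_def by (simp add: algebra_simps)
qed

lemma Gm_norm:
  assumes "c > 0"
  shows "norm (Gm c P d) \<le> (c / pzero c P) * norm d"
proof -
  define A where "A = pzero c P"
  have A: "A > 0" "A\<^sup>2 = c\<^sup>2 + (norm P)\<^sup>2" using pzero_pos[OF assms] pzero_sq A_def by auto
  have e: "Gm c P d = (c / A) *\<^sub>R (d - ((P \<bullet> d) / A\<^sup>2) *\<^sub>R P)"
    unfolding Gm_def A_def[symmetric] using A
    by (simp add: algebra_simps power2_eq_square power3_eq_cube)
  have "(norm (d - ((P \<bullet> d) / A\<^sup>2) *\<^sub>R P))\<^sup>2 = (d - ((P \<bullet> d) / A\<^sup>2) *\<^sub>R P) \<bullet> (d - ((P \<bullet> d) / A\<^sup>2) *\<^sub>R P)"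
    by (rule power2_norm_eq_inner)
  also have "\<dots> = d \<bullet> d - 2 * ((P \<bullet> d) / A\<^sup>2) * (P \<bullet> d) + ((P \<bullet> d) / A\<^sup>2)\<^sup>2 * (P \<bullet> P)"
    by (simp add: inner_diff_left inner_diff_right inner_commute power2_eq_square algebra_simps)
  also have "\<dots> = (norm d)\<^sup>2 - 2 * (P \<bullet> d)\<^sup>2 / A\<^sup>2 + (P \<bullet> d)\<^sup>2 * (norm P)\<^sup>2 / (A\<^sup>2)\<^sup>2"
    by (simp only: dot_square_norm) (simp add: power_divide power2_eq_square)
  also have "\<dots> \<le> (norm d)\<^sup>2"
  proof -
    have "(P \<bullet> d)\<^sup>2 * (norm P)\<^sup>2 / (A\<^sup>2)\<^sup>2 \<le> (P \<bullet> d)\<^sup>2 * A\<^sup>2 / (A\<^sup>2)\<^sup>2"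
      using A by (intro divide_right_mono mult_left_mono) auto
    also have "\<dots> = (P \<bullet> d)\<^sup>2 / A\<^sup>2" using A by (simp add: power2_eq_square)
    finally have "(P \<bullet> d)\<^sup>2 * (norm P)\<^sup>2 / (A\<^sup>2)\<^sup>2 \<le> (P \<bullet> d)\<^sup>2 / A\<^sup>2" .
    moreover have "(P \<bullet> d)\<^sup>2 / A\<^sup>2 \<ge> 0" by simp
    moreover have "2 * (P \<bullet> d)\<^sup>2 / A\<^sup>2 = 2 * ((P \<bullet> d)\<^sup>2 / A\<^sup>2)" by simp
    ultimately show ?thesis by linarith
  qed
  finally have "(norm (d - ((P \<bullet> d) / A\<^sup>2) *\<^sub>R P))\<^sup>2 \<le> (norm d)\<^sup>2" .
  then have "norm (d - ((P \<bullet> d) / A\<^sup>2) *\<^sub>R P) \<le> norm d"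
    by (rule power2_le_imp_le) simp
  moreover have "norm (Gm c P d) = (c / A) * norm (d - ((P \<bullet> d) / A\<^sup>2) *\<^sub>R P)"
    unfolding e using A assms by simp
  moreover have "c / A \<ge> 0" using A assms by simp
  ultimately show ?thesis unfolding A_def by (metis mult_left_mono)
qed

lemma Gm_norm1:
  assumes "c > 0"
  shows "norm (Gm c P d) \<le> norm d"
proof -
  have "c / pzero c P \<le> 1" using pzero_ge[of c P] assms by simp
  then have "(c / pzero c P) * norm d \<le> 1 * norm d" by (intro mult_right_mono) auto
  then show ?thesis using Gm_norm[OF assms, of P d] by linarith
qed

lemma onorm_Gm: "c > 0 \<Longrightarrow> onorm (Gm c P) \<le> 1"
  by (rule onorm_le) (use Gm_norm1 in auto)

lemma phat_lip:
  assumes "c > 0"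
  shows "norm (phat c P - phat c Q) \<le> norm (P - Q)"
proof -
  have "norm (phat c P - phat c Q) \<le> 1 * norm (P - Q)"
  proof (rule differentiable_bound[where S=UNIV and f'="Gm c"])
    show "convex (UNIV :: (real^3) set)" by simp
    show "\<And>x. x \<in> UNIV \<Longrightarrow> (phat c has_derivative Gm c x) (at x within UNIV)"
      using phat_deriv[OF assms] by simp
    show "\<And>x. x \<in> UNIV \<Longrightarrow> onorm (Gm c x) \<le> 1" using onorm_Gm[OF assms] by simp
  qed auto
  then show ?thesis by simp
qed

lemma phat_norm:
  assumes "c > 0" shows "norm (phat c P) \<le> c"
proof -
  have "norm (phat c P) = c / pzero c P * norm P"
    unfolding phat_def using pzero_pos[OF assms, of P] assms by simp
  also have "\<dots> \<le> c / pzero c P * pzero c P"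
    using pzero_ge_norm[of P c] pzero_pos[OF assms, of P] assms
    by (intro mult_left_mono) auto
  also have "\<dots> = c" using pzero_pos[OF assms, of P] by simp
  finally show ?thesis .
qed

lemma Gm_sym: "Gm c P u \<bullet> v = u \<bullet> Gm c P v"
  unfolding Gm_def by (simp add: inner_diff_left inner_diff_right inner_commute)

lemma norm_cross_le: "norm (cross3 x y) \<le> norm x * norm y"
proof -
  have "(norm (cross3 x y))\<^sup>2 \<le> (norm x * norm y)\<^sup>2" using norm_cross_dot[of x y] zero_le_power2[of "x \<bullet> y"] by linarith
  then show ?thesis by (rule power2_le_imp_le) simp
qed



definition Lf :: "real \<Rightarrow> real \<Rightarrow> real^3 \<Rightarrow> real^3 \<Rightarrow> real^3" where
  "Lf A Bc p w = A *\<^sub>R w + (Bc * (p \<bullet> w)) *\<^sub>R p"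

lemma Lf_comp: "Lf A1 B1 p (Lf A2 B2 p w) = Lf (A1 * A2) (A1 * B2 + B1 * A2 + B1 * B2 * (p \<bullet> p)) p w"
  unfolding Lf_def
  by (simp add: inner_add_right scaleR_add_right scaleR_add_left algebra_simps)

lemma Lf_sym: "Lf A B p u \<bullet> v = u \<bullet> Lf A B p v"
  unfolding Lf_def by (simp add: inner_add_left inner_add_right inner_commute)

lemma bounded_linear_Lf: "bounded_linear (Lf A B p)"
proof -
  have "bounded_linear (\<lambda>w. A *\<^sub>R w + (B * (p \<bullet> w)) *\<^sub>R p)"
  proof -
    have "bounded_linear (\<lambda>w. A *\<^sub>R w + (p \<bullet> w) *\<^sub>R (B *\<^sub>R p))"
      by (intro bounded_linear_intros)
    then show ?thesis by (simp add: mult.commute)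
  qed
  then show ?thesis unfolding Lf_def[abs_def] .
qed

lemma linear_Lf: "linear (Lf A B p)"
  using bounded_linear_Lf bounded_linear.linear by blast

lemma Gm_Lf: "Gm c P = Lf (c / pzero c P) (- c / pzero c P ^ 3) P"
  unfolding Gm_def Lf_def fun_eq_iff by (simp add: algebra_simps)

lemma axis_comp: "axis j (1::real) $ i = (if i = j then 1 else 0)"
  by (simp add: axis_def)

lemma matrix_Lf: "matrix (Lf A B p) = (\<chi> i j. A * (if i = j then 1 else 0) + B * (p $ j) * (p $ i))"
  unfolding matrix_def Lf_def
  by (simp add: vec_eq_iff inner_axis axis_comp algebra_simps)

lemma det_Lf: "det (matrix (Lf A B p)) = A\<^sup>2 * (A + B * (p \<bullet> p))"
  unfolding matrix_Lf det_3 inner_vec_def sum_3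
  by (simp add: algebra_simps power2_eq_square)

definition Rm :: "real \<Rightarrow> real^3 \<Rightarrow> real^3 \<Rightarrow> real^3" where
  "Rm c p = Lf (sqrt (pzero c p / c)) (sqrt (pzero c p / c) * (1 / (c * (pzero c p + c)))) p"

definition Sm :: "real \<Rightarrow> real^3 \<Rightarrow> real^3 \<Rightarrow> real^3" where
  "Sm c p = Lf (sqrt (c / pzero c p)) (- (sqrt (c / pzero c p) * (1 / (pzero c p * (pzero c p + c))))) p"

lemma Lf_id: "Lf 1 0 p w = w" unfolding Lf_def by simp

lemma sqrt_inv_mult: "a > 0 \<Longrightarrow> b > 0 \<Longrightarrow> sqrt (a / b) * sqrt (b / a) = 1"
  by (simp add: real_sqrt_mult[symmetric])

lemma pp_eq: "p \<bullet> p = (pzero c p)\<^sup>2 - c\<^sup>2"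
  using pzero_sq[of c p] by (simp add: power2_norm_eq_inner)

lemma scal_id1:
  fixes a c :: real assumes "a > 0" "c > 0"
  shows "1 / (c * (a + c)) - 1 / (a * (a + c)) - (a\<^sup>2 - c\<^sup>2) / (c * (a + c) * a * (a + c)) = 0"
proof -
  define e where "e = a + c"
  have e: "e > 0" using assms e_def by simp
  have q: "a\<^sup>2 - c\<^sup>2 = (a - c) * e" unfolding e_def by (simp add: algebra_simps power2_eq_square)
  have "1 / (c * e) - 1 / (a * e) - (a - c) * e / (c * e * a * e) = 0"
    using e assms by (simp add: field_simps)
  then show ?thesis unfolding q e_def .
qed

lemma scal_id2:
  fixes a c :: real assumes "a > 0" "c > 0"
  shows "c / a * (1 / (c * (a + c))) + - c / a ^ 3 + - c / a ^ 3 * (1 / (c * (a + c))) * (a\<^sup>2 - c\<^sup>2) +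
    1 / (c * (a + c)) * (c / a) + 1 / (c * (a + c)) * (a\<^sup>2 - c\<^sup>2) *
     (c / a * (1 / (c * (a + c))) + - c / a ^ 3 + - c / a ^ 3 * (1 / (c * (a + c))) * (a\<^sup>2 - c\<^sup>2)) = 0"
proof -
  define e where "e = a + c"
  have e: "e > 0" using assms e_def by simp
  have q: "a\<^sup>2 - c\<^sup>2 = (a - c) * e" unfolding e_def by (simp add: algebra_simps power2_eq_square)
  have "c / a * (1 / (c * e)) + - c / a ^ 3 + - c / a ^ 3 * (1 / (c * e)) * ((a - c) * e) +
    1 / (c * e) * (c / a) + 1 / (c * e) * ((a - c) * e) *
     (c / a * (1 / (c * e)) + - c / a ^ 3 + - c / a ^ 3 * (1 / (c * e)) * ((a - c) * e)) = 0"
    using e assms apply (simp add: field_simps power2_eq_square power3_eq_cube)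
    apply (simp add: e_def)
    by algebra
  then show ?thesis unfolding q e_def .
qed

lemma SR: assumes "c > 0" shows "Sm c p (Rm c p w) = w"
proof -
  define a where "a = pzero c p"
  have a: "a > 0" "a \<ge> c" using pzero_pos[OF assms] pzero_ge[of c p] assms a_def by auto
  have q: "p \<bullet> p = a\<^sup>2 - c\<^sup>2" using pp_eq a_def by simp
  define k where "k = sqrt (a / c)"
  define k' where "k' = sqrt (c / a)"
  have kk: "k' * k = 1" unfolding k_def k'_def using a assms sqrt_inv_mult by simp
  have "Sm c p (Rm c p w) = Lf (k' * k) (k' * (k * (1 / (c * (a + c)))) + - (k' * (1 / (a * (a + c)))) * k
       + - (k' * (1 / (a * (a + c)))) * (k * (1 / (c * (a + c)))) * (p \<bullet> p)) p w"
    unfolding Sm_def Rm_def Lf_comp a_def[symmetric] k_def[symmetric] k'_def[symmetric] ..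
  also have "k' * (k * (1 / (c * (a + c)))) + - (k' * (1 / (a * (a + c)))) * k
       + - (k' * (1 / (a * (a + c)))) * (k * (1 / (c * (a + c)))) * (p \<bullet> p)
     = (k' * k) * (1 / (c * (a + c)) - 1 / (a * (a + c)) - (a\<^sup>2 - c\<^sup>2) / (c * (a + c) * a * (a + c)))"
    unfolding q by (simp add: algebra_simps)
  also have "1 / (c * (a + c)) - 1 / (a * (a + c)) - (a\<^sup>2 - c\<^sup>2) / (c * (a + c) * a * (a + c)) = 0"
    by (rule scal_id1) (use a assms in auto)
  finally show ?thesis using kk Lf_id by simp
qed

lemma RS: assumes "c > 0" shows "Rm c p (Sm c p w) = w"
proof -
  define a where "a = pzero c p"
  have a: "a > 0" "a \<ge> c" using pzero_pos[OF assms] pzero_ge[of c p] assms a_def by auto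
  have q: "p \<bullet> p = a\<^sup>2 - c\<^sup>2" using pp_eq a_def by simp
  define k where "k = sqrt (a / c)"
  define k' where "k' = sqrt (c / a)"
  have kk: "k * k' = 1" unfolding k_def k'_def using a assms sqrt_inv_mult by simp
  have "Rm c p (Sm c p w) = Lf (k * k') (k * (- (k' * (1 / (a * (a + c))))) + (k * (1 / (c * (a + c)))) * k'
       + (k * (1 / (c * (a + c)))) * (- (k' * (1 / (a * (a + c))))) * (p \<bullet> p)) p w"
    unfolding Sm_def Rm_def Lf_comp a_def[symmetric] k_def[symmetric] k'_def[symmetric] ..
  also have "k * (- (k' * (1 / (a * (a + c))))) + (k * (1 / (c * (a + c)))) * k'
       + (k * (1 / (c * (a + c)))) * (- (k' * (1 / (a * (a + c))))) * (p \<bullet> p)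
     = (k * k') * (1 / (c * (a + c)) - 1 / (a * (a + c)) - (a\<^sup>2 - c\<^sup>2) / (c * (a + c) * a * (a + c)))"
    unfolding q by (simp add: algebra_simps)
  also have "1 / (c * (a + c)) - 1 / (a * (a + c)) - (a\<^sup>2 - c\<^sup>2) / (c * (a + c) * a * (a + c)) = 0"
    by (rule scal_id1) (use a assms in auto)
  finally show ?thesis using kk Lf_id by simp
qed

lemma RGR: assumes "c > 0" shows "Rm c p (Gm c p (Rm c p w)) = w"
proof -
  define a where "a = pzero c p"
  have a: "a > 0" "a \<ge> c" using pzero_pos[OF assms] pzero_ge[of c p] assms a_def by auto
  have q: "p \<bullet> p = a\<^sup>2 - c\<^sup>2" using pp_eq a_def by simp
  define k where "k = sqrt (a / c)"
  have kk: "k * k = a / c" unfolding k_def using a assms by simp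
  define al where "al = 1 / (c * (a + c))"
  define g where "g = c / a"
  define gb where "gb = - c / a ^ 3"
  have "Rm c p (Gm c p (Rm c p w)) = Lf k (k * al) p (Lf g gb p (Lf k (k * al) p w))"
    unfolding Rm_def Gm_Lf a_def[symmetric] k_def[symmetric] al_def[symmetric] g_def gb_def ..
  also have "\<dots> = Lf (k * k * g) ((k * k) * (g * al + gb + gb * al * (p \<bullet> p) + al * g
      + al * (p \<bullet> p) * (g * al + gb + gb * al * (p \<bullet> p)))) p w"
    unfolding Lf_comp by (simp add: algebra_simps)
  also have "k * k * g = 1" unfolding kk g_def using a assms by simp
  also have "g * al + gb + gb * al * (p \<bullet> p) + al * g
      + al * (p \<bullet> p) * (g * al + gb + gb * al * (p \<bullet> p)) = 0"
    unfolding q g_def gb_def al_def by (rule scal_id2) (use a assms in auto)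
  finally show ?thesis using Lf_id by simp
qed


lemma S_norm: assumes "c > 0" shows "norm (Sm c p w) \<le> norm w"
proof -
  define a where "a = pzero c p"
  have a: "a > 0" "a \<ge> c" using pzero_pos[OF assms] pzero_ge[of c p] assms a_def by auto
  have q: "p \<bullet> p = a\<^sup>2 - c\<^sup>2" using pp_eq a_def by simp
  define be where "be = 1 / (a * (a + c))"
  define s where "s = p \<bullet> w"
  have be: "be \<ge> 0" "be * (p \<bullet> p) \<le> 1"
  proof -
    show "be \<ge> 0" unfolding be_def using a assms by simp
    have "a\<^sup>2 - c\<^sup>2 \<le> a * (a + c)" using a assms by (simp add: power2_eq_square algebra_simps)
    moreover have "a * (a + c) > 0" using a assms by simp
    ultimately have "(a\<^sup>2 - c\<^sup>2) / (a * (a + c)) \<le> 1" by (simp add: divide_le_eq_1)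
    then show "be * (p \<bullet> p) \<le> 1" unfolding be_def q by simp
  qed
  have e: "Sm c p w = sqrt (c / a) *\<^sub>R (w - (be * s) *\<^sub>R p)"
    unfolding Sm_def Lf_def a_def[symmetric] be_def s_def by (simp add: algebra_simps)
  have "(norm (w - (be * s) *\<^sub>R p))\<^sup>2 = (w - (be * s) *\<^sub>R p) \<bullet> (w - (be * s) *\<^sub>R p)"
    by (rule power2_norm_eq_inner)
  also have "\<dots> = w \<bullet> w - 2 * (be * s) * s + (be * s)\<^sup>2 * (p \<bullet> p)"
    unfolding s_def by (simp add: inner_diff_left inner_diff_right inner_commute power2_eq_square algebra_simps)
  also have "\<dots> = w \<bullet> w - be * s\<^sup>2 * (2 - be * (p \<bullet> p))"
    by (simp add: power2_eq_square algebra_simps)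
  also have "\<dots> \<le> w \<bullet> w"
    using be by (simp add: mult_nonneg_nonneg)
  also have "\<dots> = (norm w)\<^sup>2" by (simp add: power2_norm_eq_inner)
  finally have n1: "norm (w - (be * s) *\<^sub>R p) \<le> norm w"
    by (rule power2_le_imp_le) simp
  have k: "sqrt (c / a) \<le> 1" using a assms by simp
  have "norm (Sm c p w) = sqrt (c / a) * norm (w - (be * s) *\<^sub>R p)" unfolding e using a assms by simp
  also have "\<dots> \<le> 1 * norm w" using n1 k by (intro mult_mono) auto
  finally show ?thesis by simp
qed

lemma Gm_quad: assumes "c > 0"
  shows "Gm c P u \<bullet> u = c * ((c * norm u)\<^sup>2 + (norm (cross3 P u))\<^sup>2) / pzero c P ^ 3"
proof -
  define A where "A = pzero c P"
  have A: "A > 0" "A\<^sup>2 = c\<^sup>2 + (norm P)\<^sup>2" using pzero_pos[OF assms] pzero_sq A_def by auto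
  have cr: "(norm (cross3 P u))\<^sup>2 = (norm P * norm u)\<^sup>2 - (P \<bullet> u)\<^sup>2" using norm_cross_dot[of P u] by simp
  have "Gm c P u \<bullet> u = (c / A) * (u \<bullet> u) - c * (P \<bullet> u) / A ^ 3 * (P \<bullet> u)"
    unfolding Gm_def A_def[symmetric] by (simp add: inner_diff_left inner_scaleR_left inner_commute[of P u])
  also have "\<dots> = c * (A\<^sup>2 * (norm u)\<^sup>2 - (P \<bullet> u)\<^sup>2) / A ^ 3"
    using A(1) by (simp add: field_simps power2_eq_square power3_eq_cube dot_square_norm)
  also have "A\<^sup>2 * (norm u)\<^sup>2 - (P \<bullet> u)\<^sup>2 = (c * norm u)\<^sup>2 + (norm (cross3 P u))\<^sup>2"
    unfolding cr A(2) by (simp add: algebra_simps power2_eq_square)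
  finally show ?thesis unfolding A_def .
qed

lemma pol_bound:
  fixes f :: "real^3 \<Rightarrow> real^3"
  assumes lin: "linear f" and sym: "\<And>u v. f u \<bullet> v = u \<bullet> f v"
    and q: "\<And>u. \<bar>u \<bullet> f u\<bar> \<le> \<eta> * (norm u)\<^sup>2"
  shows "norm (f u) \<le> \<eta> * norm u"
proof (cases "f u = 0")
  case True
  have "\<bar>axis 1 1 \<bullet> f (axis 1 1)\<bar> \<le> \<eta> * (norm (axis 1 (1::real) :: real^3))\<^sup>2" by (rule q)
  then have "0 \<le> \<eta>" by simp
  then show ?thesis using True by simp
next
  case False
  define v where "v = (norm u / norm (f u)) *\<^sub>R f u"
  have nv: "norm v = norm u" unfolding v_def using False by simp
  have fuv: "f u \<bullet> v = norm u * norm (f u)"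
    unfolding v_def using False by (simp add: power2_norm_eq_inner[symmetric] power2_eq_square)
  have eq: "(u + v) \<bullet> f (u + v) - (u - v) \<bullet> f (u - v) = 4 * (f u \<bullet> v)"
    using sym[of u v] sym[of v u] linear_add[OF lin] linear_diff[OF lin]
    by (simp add: inner_add_left inner_add_right inner_diff_left inner_diff_right inner_commute)
  have le: "(u + v) \<bullet> f (u + v) - (u - v) \<bullet> f (u - v) \<le> \<eta> * (norm (u + v))\<^sup>2 + \<eta> * (norm (u - v))\<^sup>2"
    using q[of "u + v"] q[of "u - v"] by linarith
  have eq2: "\<eta> * (norm (u + v))\<^sup>2 + \<eta> * (norm (u - v))\<^sup>2 = \<eta> * (2 * (norm u)\<^sup>2 + 2 * (norm v)\<^sup>2)"
    by (simp add: power2_norm_eq_inner inner_add_left inner_add_right inner_diff_left inner_diff_right inner_commute algebra_simps)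
  have "norm u * norm (f u) \<le> \<eta> * (norm u)\<^sup>2"
    using eq le eq2 fuv nv by (simp add: algebra_simps)
  moreover have "u \<noteq> 0" using False linear_0[OF lin] by auto
  ultimately show ?thesis by (simp add: power2_eq_square mult.commute mult.left_commute)
qed


lemma num_up: fixes d :: real assumes "0 \<le> d" "d \<le> 1/300" shows "(1 + d)\<^sup>2 \<le> (51/50) * (1 - d) ^ 3"
proof -
  have "(1 + d)\<^sup>2 \<le> (301/300)\<^sup>2" using assms by (intro power_mono) auto
  moreover have "(299/300) ^ 3 \<le> (1 - d) ^ 3" using assms by (intro power_mono) auto
  moreover have "(301/300::real)\<^sup>2 \<le> (51/50) * (299/300) ^ 3" by (simp add: power2_eq_square power3_eq_cube)
  ultimately show ?thesis by linarith
qed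

lemma num_lo: fixes d :: real assumes "0 \<le> d" "d \<le> 1/300" shows "(49/50) * (1 + d) ^ 3 \<le> (1 - d)\<^sup>2"
proof -
  have "(1 + d) ^ 3 \<le> (301/300) ^ 3" using assms by (intro power_mono) auto
  moreover have "(299/300)\<^sup>2 \<le> (1 - d)\<^sup>2" using assms by (intro power_mono) auto
  moreover have "(49/50) * (301/300::real) ^ 3 \<le> (299/300)\<^sup>2" by (simp add: power2_eq_square power3_eq_cube)
  ultimately show ?thesis by linarith
qed

lemma Qratio:
  fixes n n' a A c d :: real
  assumes "0 \<le> n" "0 \<le> n'" "n' \<le> (1 + d) * n" "(1 - d) * n \<le> n'" "a > 0"
    "(1 - d) * a \<le> A" "A \<le> (1 + d) * a" "0 \<le> d" "d \<le> 1/300" "c > 0"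
  shows "\<bar>c * n'\<^sup>2 / A ^ 3 - c * n\<^sup>2 / a ^ 3\<bar> \<le> (c * n\<^sup>2 / a ^ 3) / 50"
proof -
  define t where "t = c * n\<^sup>2 / a ^ 3"
  have d1: "1 - d > 0" using assms by simp
  have A0: "A > 0" using assms d1 by (smt (verit) mult_pos_pos)
  have t0: "t \<ge> 0" unfolding t_def using assms by simp
  have up1: "n'\<^sup>2 \<le> ((1 + d) * n)\<^sup>2" using assms by (intro power_mono) auto
  have lo1: "((1 - d) * n)\<^sup>2 \<le> n'\<^sup>2" using assms d1 by (intro power_mono) auto
  have up2: "((1 - d) * a) ^ 3 \<le> A ^ 3" using assms d1 by (intro power_mono) auto
  have lo2: "A ^ 3 \<le> ((1 + d) * a) ^ 3" using assms d1 A0 by (intro power_mono) auto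
  have "c * n'\<^sup>2 / A ^ 3 \<le> c * ((1 + d) * n)\<^sup>2 / ((1 - d) * a) ^ 3"
    using up1 up2 assms d1 by (intro frac_le mult_left_mono) auto
  also have "\<dots> = t * ((1 + d)\<^sup>2 / (1 - d) ^ 3)"
    unfolding power_mult_distrib t_def times_divide_times_eq by (simp add: mult_ac)
  also have "\<dots> \<le> t * (51/50)"
  proof -
    have "(1 + d)\<^sup>2 / (1 - d) ^ 3 \<le> 51/50" using num_up[OF assms(8,9)] d1
      by (simp add: divide_le_eq)
    then show ?thesis using t0 by (intro mult_left_mono) auto
  qed
  finally have U: "c * n'\<^sup>2 / A ^ 3 \<le> t * (51/50)" .
  have "t * (49/50) \<le> t * ((1 - d)\<^sup>2 / (1 + d) ^ 3)"
  proof -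
    have "49/50 \<le> (1 - d)\<^sup>2 / (1 + d) ^ 3" using num_lo[OF assms(8,9)] assms
      by (simp add: le_divide_eq)
    then show ?thesis using t0 by (intro mult_left_mono) auto
  qed
  also have "t * ((1 - d)\<^sup>2 / (1 + d) ^ 3) = c * ((1 - d) * n)\<^sup>2 / ((1 + d) * a) ^ 3"
    unfolding power_mult_distrib t_def times_divide_times_eq by (simp add: mult_ac)
  also have "\<dots> \<le> c * n'\<^sup>2 / A ^ 3"
    using lo1 lo2 assms d1 A0 by (intro frac_le mult_left_mono) auto
  finally have L: "t * (49/50) \<le> c * n'\<^sup>2 / A ^ 3" .
  show ?thesis using U L unfolding t_def[symmetric] by linarith
qed


lemma Qcomp:
  assumes c: "c \<ge> 1" and P: "norm (P - p) \<le> d" and d: "0 \<le> d" "d \<le> 1/300"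
  shows "\<bar>Gm c P u \<bullet> u - Gm c p u \<bullet> u\<bar> \<le> (Gm c p u \<bullet> u) / 50"
proof -
  have c0: "c > 0" using c by simp
  define n where "n = norm (c * norm u, cross3 p u)"
  define n' where "n' = norm (c * norm u, cross3 P u)"
  have nsq: "n\<^sup>2 = (c * norm u)\<^sup>2 + (norm (cross3 p u))\<^sup>2" unfolding n_def norm_Pair by simp
  have nsq': "n'\<^sup>2 = (c * norm u)\<^sup>2 + (norm (cross3 P u))\<^sup>2" unfolding n'_def norm_Pair by simp
  have "\<bar>n' - n\<bar> \<le> norm ((c * norm u, cross3 P u) - (c * norm u, cross3 p u))"
    unfolding n_def n'_def by (rule norm_triangle_ineq3)
  also have "norm ((c * norm u, cross3 P u) - (c * norm u, cross3 p u)) = norm (cross3 (P - p) u)"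
    by (simp add: norm_Pair Cross3.left_diff_distrib)
  also have "\<dots> \<le> norm (P - p) * norm u" by (rule norm_cross_le)
  also have "\<dots> \<le> d * norm u" using P by (simp add: mult_right_mono)
  also have "\<dots> \<le> d * n"
  proof -
    have "1 * norm u \<le> c * norm u" by (rule mult_right_mono) (use c in auto)
    then have "norm u \<le> \<bar>c * norm u\<bar>" by simp
    also have "\<bar>c * norm u\<bar> \<le> n" unfolding n_def norm_Pair by (rule real_le_rsqrt) simp 
    finally show ?thesis using d by (simp add: mult_left_mono)
  qed
  finally have nn: "\<bar>n' - n\<bar> \<le> d * n" .
  define a where "a = pzero c p"
  define A where "A = pzero c P"
  have a1: "a \<ge> 1" unfolding a_def using pzero_ge[of c p] c by simp
  have "\<bar>A - a\<bar> \<le> d" unfolding a_def A_def using pzero_lip[of c P p] P by simp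
  also have "d \<le> d * a" using a1 d by (simp add: mult_le_cancel_left1)
  finally have AA: "\<bar>A - a\<bar> \<le> d * a" .
  have QP: "Gm c P u \<bullet> u = c * n'\<^sup>2 / A ^ 3" unfolding Gm_quad[OF c0] nsq' A_def ..
  have Qp: "Gm c p u \<bullet> u = c * n\<^sup>2 / a ^ 3" unfolding Gm_quad[OF c0] nsq a_def ..
  show ?thesis unfolding QP Qp
    by (rule Qratio) (use nn AA a1 d c0 in \<open>auto simp: n_def n'_def algebra_simps abs_le_iff\<close>)
qed

lemma linear_Rm: "linear (Rm c p)" unfolding Rm_def by (rule linear_Lf)

lemma Rm_sym: "Rm c p u \<bullet> v = u \<bullet> Rm c p v" unfolding Rm_def by (rule Lf_sym)

lemma Hbound:
  assumes c: "c \<ge> 1" and P: "norm (P - p) \<le> d" and d: "0 \<le> d" "d \<le> 1/300"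
  shows "norm (Rm c p (Gm c P (Rm c p w)) - w) \<le> norm w / 50"
proof -
  have c0: "c > 0" using c by simp
  define f where "f = (\<lambda>w. Rm c p (Gm c P (Rm c p w)) - w)"
  have l1: "linear (\<lambda>x. Gm c P (Rm c p x))" using linear_compose[OF linear_Rm linear_Gm] by (simp add: o_def)
  have l2: "linear (\<lambda>x. Rm c p (Gm c P (Rm c p x)))" using linear_compose[OF l1 linear_Rm] by (simp add: o_def)
  have lin: "linear f" unfolding f_def
    by (intro linear_compose_sub l2 linear_id[unfolded id_def])
  have sym: "f u \<bullet> v = u \<bullet> f v" for u v
  proof -
    have "Rm c p (Gm c P (Rm c p u)) \<bullet> v = Gm c P (Rm c p u) \<bullet> Rm c p v" by (rule Rm_sym)
    also have "\<dots> = Rm c p u \<bullet> Gm c P (Rm c p v)" by (rule Gm_sym)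
    also have "\<dots> = u \<bullet> Rm c p (Gm c P (Rm c p v))" by (rule Rm_sym)
    finally show ?thesis unfolding f_def by (simp add: inner_diff_left inner_diff_right inner_commute)
  qed
  have q: "\<bar>u \<bullet> f u\<bar> \<le> (1/50) * (norm u)\<^sup>2" for u
  proof -
    have e1: "u \<bullet> Rm c p (Gm c P (Rm c p u)) = Gm c P (Rm c p u) \<bullet> Rm c p u"
      by (simp add: Rm_sym[symmetric] inner_commute)
    have "u \<bullet> u = u \<bullet> Rm c p (Gm c p (Rm c p u))" using RGR[OF c0] by simp
    also have "\<dots> = Gm c p (Rm c p u) \<bullet> Rm c p u" by (simp add: Rm_sym[symmetric] inner_commute)
    finally have e2: "u \<bullet> u = Gm c p (Rm c p u) \<bullet> Rm c p u" .
    have "u \<bullet> f u = Gm c P (Rm c p u) \<bullet> Rm c p u - Gm c p (Rm c p u) \<bullet> Rm c p u"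
      unfolding f_def inner_diff_right e1 e2[symmetric] ..
    then have "\<bar>u \<bullet> f u\<bar> \<le> (Gm c p (Rm c p u) \<bullet> Rm c p u) / 50"
      using Qcomp[OF c P d, of "Rm c p u"] by simp
    also have "\<dots> = (1/50) * (norm u)\<^sup>2" unfolding e2[symmetric] by (simp add: power2_norm_eq_inner)
    finally show ?thesis .
  qed
  show ?thesis using pol_bound[OF lin sym q, of w] unfolding f_def by simp
qed


lemma det_Rm: assumes "c > 0" shows "(det (matrix (Rm c p)))\<^sup>2 = (pzero c p / c) ^ 5"
proof -
  define a where "a = pzero c p"
  have a: "a > 0" "a \<ge> c" using pzero_pos[OF assms] pzero_ge[of c p] assms a_def by auto
  have q: "p \<bullet> p = (a - c) * (a + c)" using pp_eq[of p c] a_def by (simp add: power2_eq_square algebra_simps)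
  define k where "k = sqrt (a / c)"
  have kk: "k\<^sup>2 = a / c" unfolding k_def using a assms by simp
  have "det (matrix (Rm c p)) = k\<^sup>2 * (k + k * (1 / (c * (a + c))) * (p \<bullet> p))"
    unfolding Rm_def det_Lf a_def[symmetric] k_def[symmetric] ..
  also have "k + k * (1 / (c * (a + c))) * (p \<bullet> p) = k * (a / c)"
  proof -
    have aux: "e \<noteq> 0 \<Longrightarrow> c \<noteq> 0 \<Longrightarrow> 1 / (c * e) * ((a - c) * e) = (a - c) / c" for e by simp
    have "k * (1 / (c * (a + c))) * (p \<bullet> p) = k * ((a - c) / c)"
      unfolding q mult.assoc[of k] using aux[of "a + c"] a assms by simp
    then show ?thesis using assms by (simp add: field_simps)
  qed
  finally have "det (matrix (Rm c p)) = k\<^sup>2 * k * (a / c)" by simp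
  then have "(det (matrix (Rm c p)))\<^sup>2 = (k\<^sup>2) ^ 3 * (a / c)\<^sup>2"
    by (simp add: power2_eq_square power3_eq_cube)
  also have "\<dots> = (a / c) ^ 5" unfolding kk by (simp add: power_add[symmetric])
  finally show ?thesis unfolding a_def .
qed

lemma abs3: fixes x y z :: real
  shows "\<bar>x\<bar> \<le> a \<Longrightarrow> \<bar>y\<bar> \<le> b \<Longrightarrow> \<bar>z\<bar> \<le> c \<Longrightarrow> \<bar>x * y * z\<bar> \<le> a * b * c"
  unfolding abs_mult by (intro mult_mono) (auto intro: order_trans[OF abs_ge_zero])

lemma det_pert:
  fixes M :: "real^3^3"
  assumes d: "d \<ge> 0" and e: "\<And>i j. \<bar>M $ i $ j + (if i = j then d else 0)\<bar> \<le> d / 20"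
  shows "d ^ 3 / 2 \<le> \<bar>det M\<bar> \<and> \<bar>det M\<bar> \<le> 2 * d ^ 3"
proof -
  have off: "\<bar>M $ i $ j\<bar> \<le> d / 20" if "i \<noteq> j" for i j using e[of i j] that by simp
  have dg: "19/20 * d \<le> - M $ i $ i \<and> - M $ i $ i \<le> 21/20 * d" for i
  proof -
    have "\<bar>M $ i $ i + d\<bar> \<le> d / 20" using e[of i i] by simp
    then show ?thesis unfolding abs_le_iff by linarith
  qed
  have dga: "\<bar>M $ i $ i\<bar> \<le> 21/20 * d" for i using dg[of i] d by (simp add: abs_le_iff)
  define y1 where "y1 = - M$1$1"
  define y2 where "y2 = - M$2$2"
  define y3 where "y3 = - M$3$3"
  define D where "D = y1 * y2 * y3"
  have y: "19/20 * d \<le> y1" "y1 \<le> 21/20 * d" "19/20 * d \<le> y2" "y2 \<le> 21/20 * d"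
    "19/20 * d \<le> y3" "y3 \<le> 21/20 * d"
    unfolding y1_def y2_def y3_def using dg[of 1] dg[of 2] dg[of 3] by auto
  have y0: "0 \<le> y1" "0 \<le> y2" "0 \<le> y3" using y d by linarith+
  have Dlo: "(19/20 * d) * (19/20 * d) * (19/20 * d) \<le> D" unfolding D_def
    using y y0 d by (intro mult_mono) auto
  have Dhi: "D \<le> (21/20 * d) * (21/20 * d) * (21/20 * d)" unfolding D_def
    using y y0 d by (intro mult_mono) auto
  have t1: "\<bar>M$1$2 * M$2$3 * M$3$1\<bar> \<le> (d/20) * (d/20) * (d/20)" by (intro abs3 off) auto
  have t2: "\<bar>M$1$3 * M$2$1 * M$3$2\<bar> \<le> (d/20) * (d/20) * (d/20)" by (intro abs3 off) auto
  have t3: "\<bar>M$1$1 * M$2$3 * M$3$2\<bar> \<le> (21/20 * d) * (d/20) * (d/20)" by (intro abs3 off dga) auto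
  have t4: "\<bar>M$1$2 * M$2$1 * M$3$3\<bar> \<le> (d/20) * (d/20) * (21/20 * d)" by (intro abs3 off dga) auto
  have t5: "\<bar>M$1$3 * M$2$2 * M$3$1\<bar> \<le> (d/20) * (21/20 * d) * (d/20)" by (intro abs3 off dga) auto
  have det: "det M = - D + M$1$2 * M$2$3 * M$3$1 + M$1$3 * M$2$1 * M$3$2 - M$1$1 * M$2$3 * M$3$2
      - M$1$2 * M$2$1 * M$3$3 - M$1$3 * M$2$2 * M$3$1"
    unfolding det_3 D_def y1_def y2_def y3_def by simp
  define w where "w = d * d * d"
  have d3: "d ^ 3 = w" unfolding w_def by (simp add: power3_eq_cube)
  have w0: "w \<ge> 0" unfolding w_def using d by simp
  have e1: "(d/20) * (d/20) * (d/20) = w / 8000" unfolding w_def by simp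
  have e2: "(21/20 * d) * (d/20) * (d/20) = 21 * w / 8000" unfolding w_def by simp
  have e3: "(d/20) * (d/20) * (21/20 * d) = 21 * w / 8000" unfolding w_def by simp
  have e4: "(d/20) * (21/20 * d) * (d/20) = 21 * w / 8000" unfolding w_def by simp
  have e5: "(19/20 * d) * (19/20 * d) * (19/20 * d) = 6859 * w / 8000" unfolding w_def by simp
  have e6: "(21/20 * d) * (21/20 * d) * (21/20 * d) = 9261 * w / 8000" unfolding w_def by simp
  note bnds = t1[unfolded e1] t2[unfolded e1] t3[unfolded e2] t4[unfolded e3] t5[unfolded e4]
    Dlo[unfolded e5] Dhi[unfolded e6]
  have "det M \<le> - (w / 2)" "- (2 * w) \<le> det M"
    using bnds w0 unfolding det abs_le_iff by linarith+
  then show ?thesis unfolding d3 by (simp add: abs_if)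
qed



lemma int_cont_bound:
  fixes g :: "real \<Rightarrow> 'a::banach"
  assumes ab: "a \<le> b" and g: "continuous_on {a..b} g"
  shows "continuous_on UNIV (\<lambda>s. integral {max a (min b s)..b} g)"
proof -
  have i: "g integrable_on {a..b}" by (rule integrable_continuous_interval[OF g])
  have c1: "continuous_on {a..b} (\<lambda>x. integral {x..b} g)" by (rule indefinite_integral_continuous_1'[OF i])
  have c2: "continuous_on UNIV (\<lambda>s. max a (min b s))" by (intro continuous_intros)
  have im: "(\<lambda>s. max a (min b s)) ` UNIV \<subseteq> {a..b}" using ab by auto
  show ?thesis using continuous_on_compose2[OF c1 c2 im] by simp
qed

lemma int_bound_sub:
  fixes g :: "real \<Rightarrow> 'a::banach"
  assumes ab: "a \<le> s" "s \<le> b" and g: "continuous_on {a..b} g" and K: "\<And>r. r \<in> {a..b} \<Longrightarrow> norm (g r) \<le> K"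
  shows "norm (integral {s..b} g) \<le> K * (b - s)"
  by (rule integral_bound) (use ab g K in \<open>auto intro: continuous_on_subset\<close>)

lemma cont_bounded_on:
  fixes g :: "real \<Rightarrow> 'a::real_normed_vector"
  assumes "continuous_on {a..b} g"
  obtains K where "K \<ge> 0" "\<And>r. r \<in> {a..b} \<Longrightarrow> norm (g r) \<le> K"
proof -
  have "bounded (g ` {a..b})" by (rule compact_imp_bounded[OF compact_continuous_image[OF assms compact_Icc]])
  then obtain K where "K > 0" "\<And>x. x \<in> g ` {a..b} \<Longrightarrow> norm x \<le> K" by (auto simp: bounded_pos)
  then show ?thesis using that[of K] by auto
qed

lemma nfst: "norm (fst (x::'a::real_normed_vector \<times> 'b::real_normed_vector)) \<le> norm x"
  using norm_fst_le[of "fst x" "snd x"] by simp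

lemma nsnd: "norm (snd (x::'a::real_normed_vector \<times> 'b::real_normed_vector)) \<le> norm x"
  using norm_snd_le[of "snd x" "fst x"] by simp

lemma lin_ode_exists:
  fixes Ly :: "real \<Rightarrow> real^3 \<Rightarrow> real^3" and Lz :: "real \<Rightarrow> real^3 \<Rightarrow> real^3 \<Rightarrow> real^3" and h :: "real^3"
  assumes ab: "a \<le> b"
   and cy: "\<And>z. continuous_on {a..b} z \<Longrightarrow> continuous_on {a..b} (\<lambda>r. Ly r (z r))"
   and cz: "\<And>y z. continuous_on {a..b} y \<Longrightarrow> continuous_on {a..b} z \<Longrightarrow> continuous_on {a..b} (\<lambda>r. Lz r (y r) (z r))"
   and ly: "\<And>r z z'. r \<in> {a..b} \<Longrightarrow> norm (Ly r z - Ly r z') \<le> L * norm (z - z')"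
   and lz: "\<And>r y z y' z'. r \<in> {a..b} \<Longrightarrow> norm (Lz r y z - Lz r y' z') \<le> L * (norm (y - y') + norm (z - z'))"
   and L: "0 \<le> L" "4 * L * (b - a) < 1"
  shows "\<exists>y z. continuous_on {a..b} y \<and> continuous_on {a..b} z \<and>
     (\<forall>s\<in>{a..b}. y s = - integral {s..b} (\<lambda>r. Ly r (z r)) \<and> z s = h + integral {s..b} (\<lambda>r. Lz r (y r) (z r)))"
proof -
  define cl where "cl s = max a (min b s)" for s :: real
  have cl: "cl s \<in> {a..b}" for s unfolding cl_def using ab by auto
  have cl_id: "s \<in> {a..b} \<Longrightarrow> cl s = s" for s unfolding cl_def by auto
  define F where "F = (\<lambda>(\<phi> :: real \<Rightarrow>\<^sub>C ((real^3) \<times> (real^3))) s.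
     (- integral {cl s..b} (\<lambda>r. Ly r (snd (apply_bcontfun \<phi> r))),
      h + integral {cl s..b} (\<lambda>r. Lz r (fst (apply_bcontfun \<phi> r)) (snd (apply_bcontfun \<phi> r)))))"
  have cfst: "continuous_on {a..b} (\<lambda>r. fst (apply_bcontfun \<phi> r))" for \<phi> :: "real \<Rightarrow>\<^sub>C ((real^3) \<times> (real^3))"
    by (intro continuous_intros) auto
  have csnd: "continuous_on {a..b} (\<lambda>r. snd (apply_bcontfun \<phi> r))" for \<phi> :: "real \<Rightarrow>\<^sub>C ((real^3) \<times> (real^3))"
    by (intro continuous_intros) auto
  have Fbc: "F \<phi> \<in> bcontfun" for \<phi>
  proof -
    define g1 where "g1 = (\<lambda>r. Ly r (snd (apply_bcontfun \<phi> r)))"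
    define g2 where "g2 = (\<lambda>r. Lz r (fst (apply_bcontfun \<phi> r)) (snd (apply_bcontfun \<phi> r)))"
    have c1: "continuous_on {a..b} g1" unfolding g1_def by (rule cy[OF csnd])
    have c2: "continuous_on {a..b} g2" unfolding g2_def by (rule cz[OF cfst csnd])
    obtain K1 where K1: "K1 \<ge> 0" "\<And>r. r \<in> {a..b} \<Longrightarrow> norm (g1 r) \<le> K1" using cont_bounded_on[OF c1] by blast
    obtain K2 where K2: "K2 \<ge> 0" "\<And>r. r \<in> {a..b} \<Longrightarrow> norm (g2 r) \<le> K2" using cont_bounded_on[OF c2] by blast
    have "continuous_on UNIV (F \<phi>)"
      unfolding F_def g1_def[symmetric] g2_def[symmetric] cl_def
      using int_cont_bound[OF ab c1] int_cont_bound[OF ab c2]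
      by (auto intro!: continuous_intros)
    moreover have "norm (F \<phi> s) \<le> K1 * (b - a) + (norm h + K2 * (b - a))" for s
    proof -
      have "norm (F \<phi> s) \<le> norm (integral {cl s..b} g1) + norm (h + integral {cl s..b} g2)"
        unfolding F_def g1_def[symmetric] g2_def[symmetric] using norm_Pair_le[of "- integral {cl s..b} g1" "h + integral {cl s..b} g2"] by simp
      also have "\<dots> \<le> K1 * (b - cl s) + (norm h + K2 * (b - cl s))"
        using int_bound_sub[of a "cl s" b g1 K1] int_bound_sub[of a "cl s" b g2 K2] cl[of s] c1 c2 K1 K2
        by (smt (verit, best) atLeastAtMost_iff norm_triangle_ineq)
      also have "\<dots> \<le> K1 * (b - a) + (norm h + K2 * (b - a))"
        using cl[of s] K1 K2 by (intro add_mono mult_left_mono) auto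
      finally show ?thesis .
    qed
    ultimately show ?thesis by (rule bcontfun_normI)
  qed
  define G where "G \<phi> = Bcontfun (F \<phi>)" for \<phi>
  have Gapp: "apply_bcontfun (G \<phi>) s = F \<phi> s" for \<phi> s
    unfolding G_def using Fbc[of \<phi>] by (simp add: Bcontfun_inverse)
  define k where "k = 3 * L * (b - a)"
  have k: "0 \<le> k" "k < 1" unfolding k_def using L ab by auto
  have contr: "dist (G \<phi>) (G \<psi>) \<le> k * dist \<phi> \<psi>" for \<phi> \<psi>
  proof (rule dist_bound)
    fix s
    define D where "D = dist \<phi> \<psi>"
    have pt: "norm (apply_bcontfun \<phi> r - apply_bcontfun \<psi> r) \<le> D" for r
      unfolding D_def using dist_bounded[of \<phi> r \<psi>] by (simp add: dist_norm)
    have pf: "norm (fst (apply_bcontfun \<phi> r) - fst (apply_bcontfun \<psi> r)) \<le> D" for r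
      using pt[of r] nfst[of "apply_bcontfun \<phi> r - apply_bcontfun \<psi> r"] by simp
    have ps: "norm (snd (apply_bcontfun \<phi> r) - snd (apply_bcontfun \<psi> r)) \<le> D" for r
      using pt[of r] nsnd[of "apply_bcontfun \<phi> r - apply_bcontfun \<psi> r"] by simp
    define g1 where "g1 = (\<lambda>r. Ly r (snd (apply_bcontfun \<phi> r)) - Ly r (snd (apply_bcontfun \<psi> r)))"
    define g2 where "g2 = (\<lambda>r. Lz r (fst (apply_bcontfun \<phi> r)) (snd (apply_bcontfun \<phi> r)) - Lz r (fst (apply_bcontfun \<psi> r)) (snd (apply_bcontfun \<psi> r)))"
    have c1: "continuous_on {a..b} g1" unfolding g1_def by (intro continuous_on_diff cy csnd)
    have c2: "continuous_on {a..b} g2" unfolding g2_def by (intro continuous_on_diff cz csnd cfst)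
    have b1: "norm (g1 r) \<le> L * D" if "r \<in> {a..b}" for r
      unfolding g1_def using ly[OF that] ps[of r] L by (meson mult_left_mono order_trans)
    have b2: "norm (g2 r) \<le> 2 * L * D" if "r \<in> {a..b}" for r
    proof -
      have "norm (g2 r) \<le> L * (D + D)" unfolding g2_def using lz[OF that] pf[of r] ps[of r] L
        by (meson add_mono mult_left_mono order_trans)
      then show ?thesis by simp
    qed
    have i1: "integral {cl s..b} (\<lambda>r. Ly r (snd (apply_bcontfun \<phi> r))) - integral {cl s..b} (\<lambda>r. Ly r (snd (apply_bcontfun \<psi> r))) = integral {cl s..b} g1"
      unfolding g1_def using cl[of s]
      by (intro integral_diff[symmetric] integrable_continuous_interval continuous_on_subset[OF cy[OF csnd]]) auto
    have i2: "integral {cl s..b} (\<lambda>r. Lz r (fst (apply_bcontfun \<phi> r)) (snd (apply_bcontfun \<phi> r))) - integral {cl s..b} (\<lambda>r. Lz r (fst (apply_bcontfun \<psi> r)) (snd (apply_bcontfun \<psi> r))) = integral {cl s..b} g2"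
      unfolding g2_def using cl[of s]
      by (intro integral_diff[symmetric] integrable_continuous_interval continuous_on_subset[OF cz[OF cfst csnd]]) auto
    have n1: "norm (integral {cl s..b} g1) \<le> L * D * (b - cl s)"
      using int_bound_sub[of a "cl s" b g1 "L * D"] cl[of s] c1 b1 by auto
    have n2: "norm (integral {cl s..b} g2) \<le> 2 * L * D * (b - cl s)"
      using int_bound_sub[of a "cl s" b g2 "2 * L * D"] cl[of s] c2 b2 by auto
    have "dist (apply_bcontfun (G \<phi>) s) (apply_bcontfun (G \<psi>) s) = norm (F \<phi> s - F \<psi> s)"
      unfolding Gapp dist_norm ..
    also have "F \<phi> s - F \<psi> s = (- integral {cl s..b} g1, integral {cl s..b} g2)"
      unfolding F_def using i1 i2 by (simp add: algebra_simps)
    also have "norm (- integral {cl s..b} g1, integral {cl s..b} g2) \<le> L * D * (b - cl s) + 2 * L * D * (b - cl s)"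
      using norm_Pair_le[of "- integral {cl s..b} g1" "integral {cl s..b} g2"] n1 n2 by (simp only: norm_minus_cancel)
    also have "\<dots> = 3 * L * D * (b - cl s)" by (simp add: algebra_simps)
    also have "\<dots> \<le> 3 * L * D * (b - a)"
      using cl[of s] L by (intro mult_left_mono) (auto simp: D_def)
    also have "\<dots> = k * dist \<phi> \<psi>" unfolding k_def D_def by simp
    finally show "dist (apply_bcontfun (G \<phi>) s) (apply_bcontfun (G \<psi>) s) \<le> k * dist \<phi> \<psi>" .
  qed
  obtain \<phi> where fixp: "G \<phi> = \<phi>" using banach_fix_type[OF k, of G] contr by blast
  define y where "y r = fst (apply_bcontfun \<phi> r)" for r
  define z where "z r = snd (apply_bcontfun \<phi> r)" for r
  have "continuous_on {a..b} y" unfolding y_def by (rule cfst)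
  moreover have "continuous_on {a..b} z" unfolding z_def by (rule csnd)
  moreover have "y s = - integral {s..b} (\<lambda>r. Ly r (z r)) \<and> z s = h + integral {s..b} (\<lambda>r. Lz r (y r) (z r))"
    if "s \<in> {a..b}" for s
  proof -
    have "apply_bcontfun \<phi> s = F \<phi> s" using Gapp[of \<phi> s] fixp by simp
    then show ?thesis unfolding y_def z_def F_def cl_id[OF that] by simp
  qed
  ultimately show ?thesis by blast
qed



lemma mv_cont: fixes A :: "'a::topological_space \<Rightarrow> real^'n^'m"
  shows "continuous_on S A \<Longrightarrow> continuous_on S y \<Longrightarrow> continuous_on S (\<lambda>r. A r *v y r)"
  unfolding matrix_vector_mult_def by (intro continuous_intros)

lemma entry_le_norm: fixes A :: "real^'n^'m" shows "\<bar>A $ i $ j\<bar> \<le> norm A"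
  using component_le_norm_cart[of "A $ i" j] Finite_Cartesian_Product.norm_nth_le[of A i] by simp

lemma mv_norm:
  fixes A :: "real^3^3"
  assumes "\<And>i j. \<bar>A $ i $ j\<bar> \<le> K"
  shows "norm (A *v y) \<le> 9 * K * norm y"
proof -
  have "onorm ((*v) A) \<le> real CARD(3) * real CARD(3) * K" by (rule onorm_le_matrix_component[OF assms])
  then have o: "onorm ((*v) A) \<le> 9 * K" by simp
  have "norm (A *v y) \<le> onorm ((*v) A) * norm y" by (rule onorm[OF matrix_vector_mul_bounded_linear])
  also have "\<dots> \<le> 9 * K * norm y" using o by (simp add: mult_right_mono)
  finally show ?thesis .
qed

lemma mv_norm2: "norm ((A :: real^3^3) *v y) \<le> 9 * norm A * norm y"
  by (rule mv_norm) (rule entry_le_norm)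

lemma Gm_cont: "c > 0 \<Longrightarrow> continuous_on S f \<Longrightarrow> continuous_on S g \<Longrightarrow> continuous_on S (\<lambda>r. Gm c (f r) (g r))"
  unfolding Gm_def pzero_def
  by (intro continuous_intros) (auto simp: add_pos_nonneg)

lemma phat_cont: "c > 0 \<Longrightarrow> continuous_on S f \<Longrightarrow> continuous_on S (\<lambda>r. phat c (f r))"
  unfolding phat_def pzero_def
  by (intro continuous_intros) (auto simp: add_pos_nonneg)

lemma matrix_Gm_cont: "c > 0 \<Longrightarrow> continuous_on S (\<lambda>P. matrix (Gm c P))"
  unfolding matrix_def Gm_def pzero_def
  by (intro continuous_intros) (auto simp: add_pos_nonneg)

lemma phat_deriv_mat: "c > 0 \<Longrightarrow> (phat c has_derivative (\<lambda>h. matrix (Gm c P) *v h)) (at P)"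
  using phat_deriv[of c P] matrix_vector_mul(2)[OF linear_Gm[of c P]] by simp

lemma boot:
  fixes u :: "real \<Rightarrow> real"
  assumes ab: "a \<le> b" and cu: "continuous_on {a..b} u" and A: "0 \<le> A" and k: "0 \<le> k" "k \<le> 1/2"
    and H: "\<And>M. (\<And>r. r \<in> {a..b} \<Longrightarrow> u r \<le> M) \<Longrightarrow> (\<And>s. s \<in> {a..b} \<Longrightarrow> u s \<le> A + k * M)"
    and s: "s \<in> {a..b}"
  shows "u s \<le> 2 * A"
proof -
  obtain x0 where x0: "x0 \<in> {a..b}" "\<And>y. y \<in> {a..b} \<Longrightarrow> u y \<le> u x0"
    using continuous_attains_sup[OF compact_Icc _ cu] ab by auto
  have "u x0 \<le> A + k * u x0" by (rule H[OF x0(2) x0(1)])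
  then have "(1 - k) * u x0 \<le> A" by (simp add: algebra_simps)
  moreover have "u x0 \<le> 2 * ((1 - k) * u x0) \<or> u x0 < 0"
  proof (cases "u x0 \<ge> 0")
    case True
    have "(2 * k) * u x0 \<le> 1 * u x0" using k True by (intro mult_right_mono) auto
    then show ?thesis by (simp add: algebra_simps)
  qed auto
  ultimately have "u x0 \<le> 2 * A" using A by linarith
  then show ?thesis using x0(2)[OF s] by simp
qed

lemma unif_rem:
  fixes f :: "real \<Rightarrow> real^3 \<Rightarrow> real^3" and Df :: "real \<Rightarrow> real^3 \<Rightarrow> real^3^3"
  assumes der: "\<And>s x. s \<in> I \<Longrightarrow> (f s has_derivative (\<lambda>h. Df s x *v h)) (at x)"
    and cont: "continuous_on (I \<times> cball 0 R) (\<lambda>(s,x). Df s x)" and cpt: "compact I"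
    and e: "\<epsilon> > 0"
  obtains \<delta> where "\<delta> > 0" "\<And>s x y. s \<in> I \<Longrightarrow> x \<in> cball 0 R \<Longrightarrow> y \<in> cball 0 R \<Longrightarrow> norm (y - x) < \<delta> \<Longrightarrow>
      norm (f s y - f s x - Df s x *v (y - x)) \<le> \<epsilon> * norm (y - x)"
proof -
  have uc: "uniformly_continuous_on (I \<times> cball 0 R) (\<lambda>(s,x). Df s x)"
    by (rule compact_uniformly_continuous[OF cont compact_Times[OF cpt compact_cball]])
  obtain \<delta> where \<delta>: "\<delta> > 0" and hd: "\<And>p p'. p \<in> I \<times> cball 0 R \<Longrightarrow> p' \<in> I \<times> cball 0 R \<Longrightarrow> dist p' p < \<delta> \<Longrightarrow>
      dist ((\<lambda>(s,x). Df s x) p') ((\<lambda>(s,x). Df s x) p) < \<epsilon> / 9"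
    using uc[unfolded uniformly_continuous_on_def, rule_format, of "\<epsilon> / 9"] e by auto
  show ?thesis
  proof (rule that[OF \<delta>])
    fix s x y assume s: "s \<in> I" and x: "x \<in> cball (0::real^3) R" and y: "y \<in> cball (0::real^3) R" and xy: "norm (y - x) < \<delta>"
    define S where "S = cball (0::real^3) R \<inter> ball x \<delta>"
    have cS: "convex S" unfolding S_def by (intro convex_Int convex_cball convex_ball)
    define g where "g w = f s w - Df s x *v w" for w
    have gd: "(g has_derivative (\<lambda>h. (Df s w - Df s x) *v h)) (at w within S)" for w
      unfolding g_def
      using has_derivative_diff[OF der[OF s, of w] bounded_linear.has_derivative[OF matrix_vector_mul_bounded_linear[of "Df s x"] has_derivative_ident]]
      by (auto intro: has_derivative_at_withinI simp: matrix_vector_mult_diff_rdistrib)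
    have gb: "onorm (\<lambda>h. (Df s w - Df s x) *v h) \<le> \<epsilon>" if w: "w \<in> S" for w
    proof -
      have "dist (Df s w) (Df s x) < \<epsilon> / 9"
        using hd[of "(s, x)" "(s, w)"] s x w \<delta> unfolding S_def by (auto simp: dist_Pair_Pair dist_commute)
      then have "\<bar>(Df s w - Df s x) $ i $ j\<bar> \<le> \<epsilon> / 9" for i j
        using entry_le_norm[of "Df s w - Df s x" i j] by (simp add: dist_norm)
      then have "onorm ((*v) (Df s w - Df s x)) \<le> real CARD(3) * real CARD(3) * (\<epsilon> / 9)"
        by (rule onorm_le_matrix_component)
      then show ?thesis by simp
    qed
    have xS: "x \<in> S" unfolding S_def using x \<delta> by simp
    have yS: "y \<in> S" unfolding S_def using y xy by (simp add: dist_norm norm_minus_commute)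
    have "norm (g y - g x) \<le> \<epsilon> * norm (y - x)"
      by (rule differentiable_bound[OF cS gd gb yS xS])
    then show "norm (f s y - f s x - Df s x *v (y - x)) \<le> \<epsilon> * norm (y - x)"
      unfolding g_def by (simp add: matrix_vector_mult_diff_distrib algebra_simps)
  qed
qed


lemma W_bnd: assumes "W1inf_field T C0 F DF" "t \<in> {0..T}"
  shows "norm (F t x) \<le> C0" "norm (DF t x) \<le> C0"
  using assms unfolding W1inf_field_def by (smt (verit) norm_ge_zero)+

lemma W_mv: assumes "W1inf_field T C0 F DF" "t \<in> {0..T}"
  shows "norm (DF t x *v y) \<le> 9 * C0 * norm y"
proof -
  have "norm (DF t x *v y) \<le> 9 * norm (DF t x) * norm y" by (rule mv_norm2)
  also have "\<dots> \<le> 9 * C0 * norm y" using W_bnd(2)[OF assms, of x] by (simp add: mult_right_mono)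
  finally show ?thesis .
qed

lemma W_der: assumes "W1inf_field T C0 F DF" "t \<in> {0..T}"
  shows "(F t has_derivative (\<lambda>h. DF t x *v h)) (at x)"
  using assms unfolding W1inf_field_def by blast

lemma W_lip: assumes "W1inf_field T C0 F DF" "t \<in> {0..T}"
  shows "norm (F t x - F t y) \<le> 9 * C0 * norm (x - y)"
proof (rule differentiable_bound[where S=UNIV and f'="\<lambda>z h. DF t z *v h"])
  show "\<And>z. z \<in> UNIV \<Longrightarrow> (F t has_derivative (\<lambda>h. DF t z *v h)) (at z within UNIV)"
    using W_der[OF assms] by simp
  show "\<And>z. z \<in> UNIV \<Longrightarrow> onorm (\<lambda>h. DF t z *v h) \<le> 9 * C0"
    using W_mv[OF assms] by (intro onorm_le) auto
qed auto

lemma W_cont: assumes W: "W1inf_field T C0 F DF" and ab: "{a..b} \<subseteq> {0..T}" and g: "continuous_on {a..b} g"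
  shows "continuous_on {a..b} (\<lambda>r. F r (g r))" "continuous_on {a..b} (\<lambda>r. DF r (g r))"
proof -
  have c1: "continuous_on ({0..T} \<times> UNIV) (\<lambda>(t, x). F t x)" "continuous_on ({0..T} \<times> UNIV) (\<lambda>(t, x). DF t x)"
    using W unfolding W1inf_field_def by auto
  have c2: "continuous_on {a..b} (\<lambda>r. (r, g r))" by (intro continuous_intros g)
  have im: "(\<lambda>r. (r, g r)) ` {a..b} \<subseteq> {0..T} \<times> UNIV" using ab by auto
  show "continuous_on {a..b} (\<lambda>r. F r (g r))" using continuous_on_compose2[OF c1(1) c2 im] by simp
  show "continuous_on {a..b} (\<lambda>r. DF r (g r))" using continuous_on_compose2[OF c1(2) c2 im] by simp
qed

lemma W_cont_ball: assumes W: "W1inf_field T C0 F DF" and ab: "{a..b} \<subseteq> {0..T}"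
  shows "continuous_on ({a..b} \<times> cball 0 R) (\<lambda>(s, x). DF s x)"
  using W ab unfolding W1inf_field_def by (auto intro: continuous_on_subset)

definition FF :: "real \<Rightarrow> (real \<Rightarrow> real^3 \<Rightarrow> real^3) \<Rightarrow> (real \<Rightarrow> real^3 \<Rightarrow> real^3) \<Rightarrow> real \<Rightarrow> real^3 \<Rightarrow> real^3 \<Rightarrow> real^3" where
  "FF c E B r x P = E r x + cross3 ((1 / pzero c P) *\<^sub>R P) (B r x)"

lemma mag_eq: "c > 0 \<Longrightarrow> (1 / pzero c P) *\<^sub>R P = (1 / c) *\<^sub>R phat c P"
  unfolding phat_def by simp

lemma FF_alt: "c > 0 \<Longrightarrow> FF c E B r x P = E r x + (1 / c) *\<^sub>R cross3 (phat c P) (B r x)"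
  unfolding FF_def mag_eq by (simp add: cross_mult_left)

lemma FF_bnd: assumes c: "c \<ge> 1" and WE: "W1inf_field T C0 E DE" and WB: "W1inf_field T C0 B DB" and r: "r \<in> {0..T}"
  shows "norm (FF c E B r x P) \<le> 2 * C0"
proof -
  have c0: "c > 0" using c by simp
  have "norm ((1 / c) *\<^sub>R cross3 (phat c P) (B r x)) = (1 / c) * norm (cross3 (phat c P) (B r x))"
    using c0 by simp
  also have "\<dots> \<le> (1 / c) * (norm (phat c P) * norm (B r x))"
    using norm_cross_le[of "phat c P" "B r x"] c0 by (intro mult_left_mono) auto
  also have "\<dots> \<le> (1 / c) * (c * C0)"
    using phat_norm[OF c0, of P] W_bnd(1)[OF WB r, of x] c0
    by (intro mult_left_mono mult_mono) auto
  also have "\<dots> = C0" using c0 by simp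
  finally have "norm ((1 / c) *\<^sub>R cross3 (phat c P) (B r x)) \<le> C0" .
  then show ?thesis unfolding FF_alt[OF c0] using W_bnd(1)[OF WE r, of x] norm_triangle_ineq[of "E r x" "(1 / c) *\<^sub>R cross3 (phat c P) (B r x)"]
    by linarith
qed

lemma flow_der: assumes fl: "is_characteristic_flow c T E B X P" and t: "t \<in> {0..T}" and s: "s \<in> {0..T}"
  shows "(X t x q has_vector_derivative phat c (P t x q s)) (at s within {0..T})"
    "(P t x q has_vector_derivative - FF c E B s (X t x q s) (P t x q s)) (at s within {0..T})"
    "X t x q t = x" "P t x q t = q"
  using fl t s unfolding is_characteristic_flow_def FF_def by (auto simp: algebra_simps)

lemma flow_cont: assumes fl: "is_characteristic_flow c T E B X P" and t: "t \<in> {0..T}"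
  shows "continuous_on {0..T} (X t x q)" "continuous_on {0..T} (P t x q)"
proof -
  show "continuous_on {0..T} (X t x q)"
    by (rule continuous_on_vector_derivative[of _ _ "\<lambda>s. phat c (P t x q s)"]) (use flow_der(1)[OF fl t] in auto)
  show "continuous_on {0..T} (P t x q)"
    by (rule continuous_on_vector_derivative[of _ _ "\<lambda>s. - FF c E B s (X t x q s) (P t x q s)"]) (use flow_der(2)[OF fl t] in auto)
qed

lemma flow_int: assumes fl: "is_characteristic_flow c T E B X P" and t: "t \<in> {0..T}" and s: "0 \<le> s" "s \<le> t"
  shows "X t x q s = x - integral {s..t} (\<lambda>r. phat c (P t x q r))"
    "P t x q s = q + integral {s..t} (\<lambda>r. FF c E B r (X t x q r) (P t x q r))"
proof -
  have sub: "{s..t} \<subseteq> {0..T}" using t s by auto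
  have "((\<lambda>r. phat c (P t x q r)) has_integral (X t x q t - X t x q s)) {s..t}"
  proof (rule fundamental_theorem_of_calculus[OF s(2)])
    fix r assume r: "r \<in> {s..t}"
    then have "r \<in> {0..T}" using sub by auto
    from has_vector_derivative_within_subset[OF flow_der(1)[OF fl t this] sub]
    show "(X t x q has_vector_derivative phat c (P t x q r)) (at r within {s..t})" .
  qed
  then show "X t x q s = x - integral {s..t} (\<lambda>r. phat c (P t x q r))"
    using flow_der(3)[OF fl t t] by (simp add: integral_unique)
  have "((\<lambda>r. - FF c E B r (X t x q r) (P t x q r)) has_integral (P t x q t - P t x q s)) {s..t}"
  proof (rule fundamental_theorem_of_calculus[OF s(2)])
    fix r assume r: "r \<in> {s..t}"
    then have "r \<in> {0..T}" using sub by auto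
    from has_vector_derivative_within_subset[OF flow_der(2)[OF fl t this] sub]
    show "(P t x q has_vector_derivative - FF c E B r (X t x q r) (P t x q r)) (at r within {s..t})" .
  qed
  then have i: "integral {s..t} (\<lambda>r. - FF c E B r (X t x q r) (P t x q r)) = P t x q t - P t x q s"
    by (rule integral_unique)
  have "- integral {s..t} (\<lambda>r. FF c E B r (X t x q r) (P t x q r)) = q - P t x q s"
    using i flow_der(4)[OF fl t t] by simp
  then show "P t x q s = q + integral {s..t} (\<lambda>r. FF c E B r (X t x q r) (P t x q r))"
    by (simp add: algebra_simps)
qed



locale inst =
  fixes c T C0 :: real and E B :: "real \<Rightarrow> real^3 \<Rightarrow> real^3" and DE DB :: "real \<Rightarrow> real^3 \<Rightarrow> real^3^3"
    and X P :: "real \<Rightarrow> real^3 \<Rightarrow> real^3 \<Rightarrow> real \<Rightarrow> real^3" and a b :: real and x p :: "real^3"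
  assumes c1: "c \<ge> 1" and WE: "W1inf_field T C0 E DE" and WB: "W1inf_field T C0 B DB"
    and fl: "is_characteristic_flow c T E B X P"
    and ab: "0 \<le> a" "a \<le> b" "b \<le> T"
    and small: "(b - a) * (\<bar>C0\<bar> + 1) \<le> 1 / 10000"
begin

definition K where "K = \<bar>C0\<bar> + 1"

lemma K: "K \<ge> 1" "C0 \<le> K" "\<bar>C0\<bar> \<le> K" unfolding K_def by auto

lemma c0: "c > 0" using c1 by simp

lemma I_sub: "{a..b} \<subseteq> {0..T}" using ab by auto
lemma b_in: "b \<in> {0..T}" using ab by auto

lemma smallK: "(b - a) * K \<le> 1 / 10000" using small unfolding K_def .

definition Ly where "Ly r z = Gm c (P b x p r) z"
definition Lz1 where "Lz1 r y = DE r (X b x p r) *v y + (1 / c) *\<^sub>R cross3 (phat c (P b x p r)) (DB r (X b x p r) *v y)"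
definition Lz2 where "Lz2 r z = (1 / c) *\<^sub>R cross3 (Gm c (P b x p r) z) (B r (X b x p r))"
definition Lz where "Lz r y z = Lz1 r y + Lz2 r z"

lemma linear_cross_left: "linear (\<lambda>u. cross3 u v)"
  using bilinear_cross unfolding bilinear_def by blast
lemma linear_cross_right: "linear (\<lambda>u. cross3 v u)"
  using bilinear_cross unfolding bilinear_def by blast

lemma lin_sc: "linear f \<Longrightarrow> linear (\<lambda>x. k *\<^sub>R f x)"
  using linear_compose[OF _ linear_scale_self[of k]] by (simp add: o_def)

lemma lin_Ly: "linear (Ly r)" unfolding Ly_def[abs_def] by (rule linear_Gm)

lemma lin_Lz1: "linear (Lz1 r)"
proof -
  have l1: "linear (\<lambda>y. DE r (X b x p r) *v y)" by simp
  have l2: "linear (\<lambda>y. cross3 (phat c (P b x p r)) (DB r (X b x p r) *v y))"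
    using linear_compose[OF matrix_vector_mul_linear[of "DB r (X b x p r)"] linear_cross_right[of "phat c (P b x p r)"]]
    by (simp add: o_def)
  show ?thesis unfolding Lz1_def[abs_def]
    by (intro linear_compose_add l1 lin_sc l2)
qed

lemma lin_Lz2: "linear (Lz2 r)"
proof -
  have l2: "linear (\<lambda>z. cross3 (Gm c (P b x p r) z) (B r (X b x p r)))"
    using linear_compose[OF linear_Gm[of c "P b x p r"] linear_cross_left[of "B r (X b x p r)"]]
    by (simp add: o_def)
  show ?thesis unfolding Lz2_def[abs_def] by (intro lin_sc l2)
qed

lemma Lz_diff: "Lz r y z - Lz r y' z' = Lz r (y - y') (z - z')"
  unfolding Lz_def using linear_diff[OF lin_Lz1] linear_diff[OF lin_Lz2] by (simp add: algebra_simps)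

lemma Ly_diff: "Ly r z - Ly r z' = Ly r (z - z')"
  using linear_diff[OF lin_Ly] by simp

lemma Ly_bnd: "norm (Ly r z) \<le> norm z" unfolding Ly_def by (rule Gm_norm1[OF c0])

lemma Lz_bnd_fine: assumes r: "r \<in> {0..T}"
  shows "norm (Lz r y z) \<le> 18 * K * norm y + K * norm (Gm c (P b x p r) z)"
proof -
  have n1: "norm (DE r (X b x p r) *v y) \<le> 9 * K * norm y"
    using W_mv[OF WE r, of "X b x p r" y] K by (smt (verit) mult_right_mono norm_ge_zero)
  have "norm ((1 / c) *\<^sub>R cross3 (phat c (P b x p r)) (DB r (X b x p r) *v y)) =
      (1 / c) * norm (cross3 (phat c (P b x p r)) (DB r (X b x p r) *v y))" using c0 by simp
  also have "\<dots> \<le> (1 / c) * (c * (9 * K * norm y))"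
  proof (intro mult_left_mono)
    have "norm (cross3 (phat c (P b x p r)) (DB r (X b x p r) *v y)) \<le> norm (phat c (P b x p r)) * norm (DB r (X b x p r) *v y)"
      by (rule norm_cross_le)
    also have "\<dots> \<le> c * (9 * K * norm y)"
      using phat_norm[OF c0, of "P b x p r"] W_mv[OF WB r, of "X b x p r" y] K c0
      by (intro mult_mono) (auto intro: order_trans[OF _ mult_right_mono])
    finally show "norm (cross3 (phat c (P b x p r)) (DB r (X b x p r) *v y)) \<le> c * (9 * K * norm y)" .
  qed (use c0 in auto)
  also have "\<dots> = 9 * K * norm y" using c0 by simp
  finally have n2: "norm ((1 / c) *\<^sub>R cross3 (phat c (P b x p r)) (DB r (X b x p r) *v y)) \<le> 9 * K * norm y" .
  have "norm (Lz2 r z) = (1 / c) * norm (cross3 (Gm c (P b x p r) z) (B r (X b x p r)))"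
    unfolding Lz2_def using c0 by simp
  also have "\<dots> \<le> 1 * (norm (Gm c (P b x p r) z) * K)"
  proof (intro mult_mono)
    show "1 / c \<le> 1" using c1 by simp
    have "norm (cross3 (Gm c (P b x p r) z) (B r (X b x p r))) \<le> norm (Gm c (P b x p r) z) * norm (B r (X b x p r))"
      by (rule norm_cross_le)
    also have "\<dots> \<le> norm (Gm c (P b x p r) z) * K"
      using W_bnd(1)[OF WB r, of "X b x p r"] K by (intro mult_left_mono) auto
    finally show "norm (cross3 (Gm c (P b x p r) z) (B r (X b x p r))) \<le> norm (Gm c (P b x p r) z) * K" .
  qed auto
  finally have n3: "norm (Lz2 r z) \<le> K * norm (Gm c (P b x p r) z)" by (simp add: mult.commute)
  have "norm (Lz r y z) \<le> norm (DE r (X b x p r) *v y) + norm ((1 / c) *\<^sub>R cross3 (phat c (P b x p r)) (DB r (X b x p r) *v y)) + norm (Lz2 r z)"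
    unfolding Lz_def Lz1_def by (meson norm_triangle_ineq order_trans add_mono order_refl)
  then show ?thesis using n1 n2 n3 by linarith
qed

lemma Lz_bnd: assumes r: "r \<in> {0..T}"
  shows "norm (Lz r y z) \<le> 18 * K * (norm y + norm z)"
proof -
  have "K * norm (Gm c (P b x p r) z) \<le> K * norm z" using Gm_norm1[OF c0] K by (intro mult_left_mono) auto
  moreover have "K * norm z \<le> 18 * K * norm z" using K by (intro mult_right_mono) auto
  ultimately show ?thesis using Lz_bnd_fine[OF r, of y z] by (simp add: algebra_simps)
qed

lemma contX: "continuous_on {a..b} (X b x q)" using flow_cont(1)[OF fl b_in] I_sub by (rule continuous_on_subset)
lemma contP: "continuous_on {a..b} (P b x q)" using flow_cont(2)[OF fl b_in] I_sub by (rule continuous_on_subset)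

lemma cont_Ly: "continuous_on {a..b} z \<Longrightarrow> continuous_on {a..b} (\<lambda>r. Ly r (z r))"
  unfolding Ly_def by (intro Gm_cont[OF c0] contP)

lemma cont_Lz: "continuous_on {a..b} y \<Longrightarrow> continuous_on {a..b} z \<Longrightarrow> continuous_on {a..b} (\<lambda>r. Lz r (y r) (z r))"
  unfolding Lz_def Lz1_def Lz2_def
  by (intro continuous_intros mv_cont W_cont[OF WE I_sub] W_cont[OF WB I_sub] contX contP phat_cont[OF c0] Gm_cont[OF c0] continuous_on_cross)

lemma sol_exists: "\<exists>y z. continuous_on {a..b} y \<and> continuous_on {a..b} z \<and>
     (\<forall>s\<in>{a..b}. y s = - integral {s..b} (\<lambda>r. Ly r (z r)) \<and> z s = h + integral {s..b} (\<lambda>r. Lz r (y r) (z r)))"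
proof (rule lin_ode_exists[where L="18 * K"])
  show "a \<le> b" using ab by simp
  show "\<And>z. continuous_on {a..b} z \<Longrightarrow> continuous_on {a..b} (\<lambda>r. Ly r (z r))" by (rule cont_Ly)
  show "\<And>y z. continuous_on {a..b} y \<Longrightarrow> continuous_on {a..b} z \<Longrightarrow> continuous_on {a..b} (\<lambda>r. Lz r (y r) (z r))" by (rule cont_Lz)
  show "norm (Ly r z - Ly r z') \<le> 18 * K * norm (z - z')" for r z z'
  proof -
    have "1 * norm (z - z') \<le> 18 * K * norm (z - z')" using K by (intro mult_right_mono) auto
    then show ?thesis unfolding Ly_diff using Ly_bnd[of r "z - z'"] by linarith
  qed
  show "r \<in> {a..b} \<Longrightarrow> norm (Lz r y z - Lz r y' z') \<le> 18 * K * (norm (y - y') + norm (z - z'))" for r y z y' z'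
    unfolding Lz_diff using Lz_bnd I_sub by blast
  show "0 \<le> 18 * K" using K by simp
  show "4 * (18 * K) * (b - a) < 1" using smallK by (simp add: algebra_simps)
qed


definition solp :: "real^3 \<Rightarrow> (real \<Rightarrow> real^3) \<times> (real \<Rightarrow> real^3) \<Rightarrow> bool" where
  "solp h yz \<longleftrightarrow> continuous_on {a..b} (fst yz) \<and> continuous_on {a..b} (snd yz) \<and>
     (\<forall>s\<in>{a..b}. fst yz s = - integral {s..b} (\<lambda>r. Ly r (snd yz r)) \<and>
        snd yz s = h + integral {s..b} (\<lambda>r. Lz r (fst yz r) (snd yz r)))"

definition ys :: "3 \<Rightarrow> real \<Rightarrow> real^3" where "ys i = fst (SOME yz. solp (axis i 1) yz)"
definition zs :: "3 \<Rightarrow> real \<Rightarrow> real^3" where "zs i = snd (SOME yz. solp (axis i 1) yz)"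

lemma solp_ex: "\<exists>yz. solp h yz"
proof -
  obtain y z where "continuous_on {a..b} y" "continuous_on {a..b} z"
     "\<forall>s\<in>{a..b}. y s = - integral {s..b} (\<lambda>r. Ly r (z r)) \<and> z s = h + integral {s..b} (\<lambda>r. Lz r (y r) (z r))"
    using sol_exists[of h] by blast
  then have "solp h (y, z)" unfolding solp_def by simp
  then show ?thesis by blast
qed

lemma ys_zs: "solp (axis i 1) (ys i, zs i)"
  unfolding ys_def zs_def using someI_ex[OF solp_ex[of "axis i 1"]] by simp

definition yv where "yv h s = (\<Sum>i\<in>UNIV. h $ i *\<^sub>R ys i s)"
definition zv where "zv h s = (\<Sum>i\<in>UNIV. h $ i *\<^sub>R zs i s)"

lemma cont_ys: "continuous_on {a..b} (ys i)" using ys_zs[of i] unfolding solp_def by simp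
lemma cont_zs: "continuous_on {a..b} (zs i)" using ys_zs[of i] unfolding solp_def by simp

lemma cont_yv: "continuous_on {a..b} (yv h)" unfolding yv_def[abs_def]
  by (intro continuous_intros cont_ys)
lemma cont_zv: "continuous_on {a..b} (zv h)" unfolding zv_def[abs_def]
  by (intro continuous_intros cont_zs)

lemma eq_ys: "s \<in> {a..b} \<Longrightarrow> ys i s = - integral {s..b} (\<lambda>r. Ly r (zs i r))"
  using ys_zs[of i] unfolding solp_def by simp
lemma eq_zs: "s \<in> {a..b} \<Longrightarrow> zs i s = axis i 1 + integral {s..b} (\<lambda>r. Lz r (ys i r) (zs i r))"
  using ys_zs[of i] unfolding solp_def by simp

lemma integrable_sub: fixes g :: "real \<Rightarrow> real^3" shows "continuous_on {a..b} g \<Longrightarrow> s \<in> {a..b} \<Longrightarrow> g integrable_on {s..b}"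
  by (rule integrable_continuous_interval) (auto intro: continuous_on_subset)

lemma eq_yv: assumes s: "s \<in> {a..b}" shows "yv h s = - integral {s..b} (\<lambda>r. Ly r (zv h r))"
proof -
  have "(\<lambda>r. Ly r (zv h r)) = (\<lambda>r. \<Sum>i\<in>UNIV. h $ i *\<^sub>R Ly r (zs i r))"
    unfolding zv_def by (simp add: linear_sum[OF lin_Ly] linear_scale[OF lin_Ly])
  moreover have "integral {s..b} (\<lambda>r. \<Sum>i\<in>UNIV. h $ i *\<^sub>R Ly r (zs i r)) = (\<Sum>i\<in>UNIV. integral {s..b} (\<lambda>r. h $ i *\<^sub>R Ly r (zs i r)))"
    by (rule integral_sum) (auto intro!: integrable_sub[OF _ s] continuous_intros cont_Ly cont_zs)
  ultimately have "integral {s..b} (\<lambda>r. Ly r (zv h r)) = (\<Sum>i\<in>UNIV. h $ i *\<^sub>R integral {s..b} (\<lambda>r. Ly r (zs i r)))"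
    by simp
  then show ?thesis unfolding yv_def using eq_ys[OF s] by (simp add: sum_negf)
qed

lemma eq_zv: assumes s: "s \<in> {a..b}" shows "zv h s = h + integral {s..b} (\<lambda>r. Lz r (yv h r) (zv h r))"
proof -
  have "(\<lambda>r. Lz r (yv h r) (zv h r)) = (\<lambda>r. \<Sum>i\<in>UNIV. h $ i *\<^sub>R Lz r (ys i r) (zs i r))"
    unfolding zv_def yv_def Lz_def
    by (simp add: linear_sum[OF lin_Lz1] linear_scale[OF lin_Lz1] linear_sum[OF lin_Lz2] linear_scale[OF lin_Lz2]
        sum.distrib scaleR_add_right)
  moreover have "integral {s..b} (\<lambda>r. \<Sum>i\<in>UNIV. h $ i *\<^sub>R Lz r (ys i r) (zs i r)) = (\<Sum>i\<in>UNIV. integral {s..b} (\<lambda>r. h $ i *\<^sub>R Lz r (ys i r) (zs i r)))"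
    by (rule integral_sum) (auto intro!: integrable_sub[OF _ s] continuous_intros cont_Lz cont_ys cont_zs)
  ultimately have "integral {s..b} (\<lambda>r. Lz r (yv h r) (zv h r)) = (\<Sum>i\<in>UNIV. h $ i *\<^sub>R integral {s..b} (\<lambda>r. Lz r (ys i r) (zs i r)))"
    by simp
  moreover have "h = (\<Sum>i\<in>UNIV. h $ i *\<^sub>R axis i 1)"
    using basis_expansion[of h] by (simp add: scalar_mult_eq_scaleR)
  ultimately show ?thesis unfolding zv_def using eq_zs[OF s]
    by (simp add: scaleR_add_right sum.distrib)
qed

lemma lin_yv: "linear (\<lambda>h. yv h s)"
  unfolding yv_def by (rule linearI) (simp_all add: scaleR_add_left sum.distrib scaleR_sum_right)

end



context inst begin

lemma ba_small: "b - a \<le> 1 / 10000" using smallK K ab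
  by (smt (verit, ccfv_SIG) mult_left_mono mult_cancel_left1)

lemma int_diff: fixes f g :: "real \<Rightarrow> real^3"
  assumes "continuous_on {a..b} f" "continuous_on {a..b} g" "s \<in> {a..b}"
  shows "integral {s..b} f - integral {s..b} g = integral {s..b} (\<lambda>r. f r - g r)"
  by (rule integral_diff[symmetric]) (use assms integrable_sub in auto)

lemma int_bnd: fixes g :: "real \<Rightarrow> real^3"
  assumes "continuous_on {a..b} g" "s \<in> {a..b}" "\<And>r. r \<in> {a..b} \<Longrightarrow> norm (g r) \<le> M" "0 \<le> M"
  shows "norm (integral {s..b} g) \<le> (b - a) * M"
proof -
  have "norm (integral {s..b} g) \<le> M * (b - s)" by (rule int_bound_sub) (use assms in auto)
  also have "\<dots> \<le> M * (b - a)" using assms by (intro mult_left_mono) auto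
  finally show ?thesis by (simp add: mult.commute)
qed

lemma cont_ph: "continuous_on {a..b} (\<lambda>r. phat c (P b x q r))"
  by (intro phat_cont[OF c0] contP)

lemma cont_FF: "continuous_on {a..b} (\<lambda>r. FF c E B r (X b x q r) (P b x q r))"
  unfolding FF_alt[OF c0]
  by (intro continuous_intros W_cont[OF WE I_sub] W_cont[OF WB I_sub] contX contP phat_cont[OF c0] continuous_on_cross)

lemma cross_diff: "cross3 a1 b1 - cross3 a2 b2 = cross3 (a1 - a2) b1 + cross3 a2 (b1 - b2)"
  by (simp add: Cross3.left_diff_distrib Cross3.right_diff_distrib)

lemma FF_lip: assumes r: "r \<in> {0..T}"
  shows "norm (FF c E B r x1 P1 - FF c E B r x2 P2) \<le> 18 * K * (norm (x1 - x2) + norm (P1 - P2))"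
proof -
  have e1: "norm (E r x1 - E r x2) \<le> 9 * K * norm (x1 - x2)"
    using W_lip[OF WE r, of x1 x2] K by (smt (verit) mult_right_mono norm_ge_zero)
  have b1: "norm (B r x1 - B r x2) \<le> 9 * K * norm (x1 - x2)"
    using W_lip[OF WB r, of x1 x2] K by (smt (verit) mult_right_mono norm_ge_zero)
  have "norm (cross3 (phat c P1) (B r x1) - cross3 (phat c P2) (B r x2))
      \<le> norm (cross3 (phat c P1 - phat c P2) (B r x1)) + norm (cross3 (phat c P2) (B r x1 - B r x2))"
    unfolding cross_diff by (rule norm_triangle_ineq)
  also have "\<dots> \<le> norm (P1 - P2) * K + c * (9 * K * norm (x1 - x2))"
  proof (intro add_mono)
    show "norm (cross3 (phat c P1 - phat c P2) (B r x1)) \<le> norm (P1 - P2) * K"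
      using norm_cross_le[of "phat c P1 - phat c P2" "B r x1"] phat_lip[OF c0, of P1 P2] W_bnd(1)[OF WB r, of x1] K
      by (smt (verit) mult_mono norm_ge_zero)
    show "norm (cross3 (phat c P2) (B r x1 - B r x2)) \<le> c * (9 * K * norm (x1 - x2))"
      using norm_cross_le[of "phat c P2" "B r x1 - B r x2"] phat_norm[OF c0, of P2] b1 c0
      by (smt (verit) mult_mono norm_ge_zero)
  qed
  finally have m: "norm (cross3 (phat c P1) (B r x1) - cross3 (phat c P2) (B r x2)) \<le> norm (P1 - P2) * K + c * (9 * K * norm (x1 - x2))" .
  have "norm ((1 / c) *\<^sub>R (cross3 (phat c P1) (B r x1) - cross3 (phat c P2) (B r x2)))
      = (1 / c) * norm (cross3 (phat c P1) (B r x1) - cross3 (phat c P2) (B r x2))" using c0 by simp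
  also have "\<dots> \<le> (1 / c) * (norm (P1 - P2) * K + c * (9 * K * norm (x1 - x2)))"
    using m c0 by (intro mult_left_mono) auto
  also have "\<dots> = (1 / c) * norm (P1 - P2) * K + 9 * K * norm (x1 - x2)" using c0 by (simp add: algebra_simps)
  also have "\<dots> \<le> norm (P1 - P2) * K + 9 * K * norm (x1 - x2)"
  proof -
    have "(1 / c) * norm (P1 - P2) \<le> 1 * norm (P1 - P2)" using c1 by (intro mult_right_mono) auto
    then show ?thesis using K by (smt (verit) mult_right_mono)
  qed
  finally have m2: "norm ((1 / c) *\<^sub>R (cross3 (phat c P1) (B r x1) - cross3 (phat c P2) (B r x2))) \<le> norm (P1 - P2) * K + 9 * K * norm (x1 - x2)" .
  have "FF c E B r x1 P1 - FF c E B r x2 P2 = (E r x1 - E r x2) + (1 / c) *\<^sub>R (cross3 (phat c P1) (B r x1) - cross3 (phat c P2) (B r x2))"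
    unfolding FF_alt[OF c0] by (simp add: algebra_simps)
  then have "norm (FF c E B r x1 P1 - FF c E B r x2 P2) \<le> 9 * K * norm (x1 - x2) + (norm (P1 - P2) * K + 9 * K * norm (x1 - x2))"
    using e1 m2 norm_triangle_ineq by (smt (verit))
  also have "\<dots> \<le> 18 * K * (norm (x1 - x2) + norm (P1 - P2))"
    using K by (simp add: algebra_simps)
  finally show ?thesis .
qed

lemma apriori: assumes s: "s \<in> {a..b}"
  shows "norm (X b x q s - X b x p s) + norm (P b x q s - P b x p s) \<le> 2 * norm (q - p)"
proof -
  define u where "u r = norm (X b x q r - X b x p r) + norm (P b x q r - P b x p r)" for r
  have cu: "continuous_on {a..b} u" unfolding u_def by (intro continuous_intros contX contP)
  have k: "0 \<le> 19 * K * (b - a)" "19 * K * (b - a) \<le> 1/2" using K ab smallK by (auto simp: algebra_simps)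
  show ?thesis unfolding u_def[symmetric]
  proof (rule boot[OF _ cu _ k _ s])
    show "a \<le> b" using ab by simp
    show "0 \<le> norm (q - p)" by simp
    fix M s assume M: "\<And>r. r \<in> {a..b} \<Longrightarrow> u r \<le> M" and s: "s \<in> {a..b}"
    have M0: "0 \<le> M" using M[of a] ab unfolding u_def by (smt (verit) atLeastAtMost_iff norm_ge_zero)
    have s0: "0 \<le> s" "s \<le> b" using s ab by auto
    have ex: "X b x q s - X b x p s = - integral {s..b} (\<lambda>r. phat c (P b x q r) - phat c (P b x p r))"
      unfolding flow_int(1)[OF fl b_in s0] int_diff[OF cont_ph cont_ph s, symmetric] by simp
    have ep: "P b x q s - P b x p s = (q - p) + integral {s..b} (\<lambda>r. FF c E B r (X b x q r) (P b x q r) - FF c E B r (X b x p r) (P b x p r))"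
      unfolding flow_int(2)[OF fl b_in s0] int_diff[OF cont_FF cont_FF s, symmetric] by simp
    have nx: "norm (X b x q s - X b x p s) \<le> (b - a) * M"
      unfolding ex norm_minus_cancel
    proof (rule int_bnd[OF _ s _ M0])
      show "continuous_on {a..b} (\<lambda>r. phat c (P b x q r) - phat c (P b x p r))" by (intro continuous_intros cont_ph)
      fix r assume r: "r \<in> {a..b}"
      have "norm (phat c (P b x q r) - phat c (P b x p r)) \<le> norm (P b x q r - P b x p r)" by (rule phat_lip[OF c0])
      also have "\<dots> \<le> u r" unfolding u_def by simp
      finally show "norm (phat c (P b x q r) - phat c (P b x p r)) \<le> M" using M[OF r] by simp
    qed
    have np: "norm (integral {s..b} (\<lambda>r. FF c E B r (X b x q r) (P b x q r) - FF c E B r (X b x p r) (P b x p r))) \<le> (b - a) * (18 * K * M)"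
    proof (rule int_bnd[OF _ s])
      show "continuous_on {a..b} (\<lambda>r. FF c E B r (X b x q r) (P b x q r) - FF c E B r (X b x p r) (P b x p r))" by (intro continuous_intros cont_FF)
      show "0 \<le> 18 * K * M" using K M0 by simp
      fix r assume r: "r \<in> {a..b}"
      have "norm (FF c E B r (X b x q r) (P b x q r) - FF c E B r (X b x p r) (P b x p r)) \<le> 18 * K * u r"
        unfolding u_def using FF_lip r I_sub by blast
      also have "\<dots> \<le> 18 * K * M" using M[OF r] K by (intro mult_left_mono) auto
      finally show "norm (FF c E B r (X b x q r) (P b x q r) - FF c E B r (X b x p r) (P b x p r)) \<le> 18 * K * M" .
    qed
    have "u s \<le> (b - a) * M + (norm (q - p) + (b - a) * (18 * K * M))"
      unfolding u_def using nx np ep norm_triangle_ineq by (smt (verit))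
    also have "\<dots> \<le> norm (q - p) + 19 * K * (b - a) * M"
    proof -
      have "1 * (b - a) \<le> K * (b - a)" using K ab by (intro mult_right_mono) auto
      then have "(b - a) * M \<le> K * (b - a) * M" using M0 by (intro mult_right_mono) auto
      then show ?thesis by (simp add: algebra_simps)
    qed
    finally show "u s \<le> norm (q - p) + 19 * K * (b - a) * M" .
  qed
qed


lemma rho2:
  assumes r: "r \<in> {0..T}" and eps: "0 \<le> \<epsilon>"
    and hE: "norm (E r x2 - E r x1 - DE r x1 *v (x2 - x1)) \<le> \<epsilon> * norm (x2 - x1)"
    and hB: "norm (B r x2 - B r x1 - DB r x1 *v (x2 - x1)) \<le> \<epsilon> * norm (x2 - x1)"
    and hP: "norm (phat c P2 - phat c P1 - Gm c P1 (P2 - P1)) \<le> \<epsilon> * norm (P2 - P1)"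
    and hx: "9 * K * norm (x2 - x1) \<le> \<epsilon>"
  shows "norm (FF c E B r x2 P2 - FF c E B r x1 P1 - (DE r x1 *v (x2 - x1) + (1 / c) *\<^sub>R cross3 (phat c P1) (DB r x1 *v (x2 - x1))
     + (1 / c) *\<^sub>R cross3 (Gm c P1 (P2 - P1)) (B r x1))) \<le> (K + 2) * \<epsilon> * (norm (x2 - x1) + norm (P2 - P1))"
proof -
  define dx where "dx = x2 - x1"
  define dp where "dp = P2 - P1"
  define A1 where "A1 = E r x2 - E r x1 - DE r x1 *v dx"
  define A2 where "A2 = cross3 (phat c P2 - phat c P1 - Gm c P1 dp) (B r x2)"
  define A3 where "A3 = cross3 (Gm c P1 dp) (B r x2 - B r x1)"
  define A4 where "A4 = cross3 (phat c P1) (B r x2 - B r x1 - DB r x1 *v dx)"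
  have eq: "FF c E B r x2 P2 - FF c E B r x1 P1 - (DE r x1 *v dx + (1 / c) *\<^sub>R cross3 (phat c P1) (DB r x1 *v dx)
     + (1 / c) *\<^sub>R cross3 (Gm c P1 dp) (B r x1)) = A1 + (1 / c) *\<^sub>R (A2 + A3 + A4)"
    unfolding FF_alt[OF c0] A1_def A2_def A3_def A4_def
    by (simp add: Cross3.left_diff_distrib Cross3.right_diff_distrib cross_add_left cross_add_right algebra_simps)
  have n1: "norm A1 \<le> \<epsilon> * norm dx" unfolding A1_def dx_def using hE .
  have n2: "norm A2 \<le> \<epsilon> * norm dp * K"
    unfolding A2_def using norm_cross_le[of "phat c P2 - phat c P1 - Gm c P1 dp" "B r x2"] hP[folded dp_def] W_bnd(1)[OF WB r, of x2] K eps
    by (smt (verit) mult_mono mult_nonneg_nonneg norm_ge_zero)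
  have n3: "norm A3 \<le> norm dp * \<epsilon>"
  proof -
    have "norm A3 \<le> norm (Gm c P1 dp) * norm (B r x2 - B r x1)" unfolding A3_def by (rule norm_cross_le)
    also have "\<dots> \<le> norm dp * (9 * K * norm dx)"
      using Gm_norm1[OF c0, of P1 dp] W_lip[OF WB r, of x2 x1] K
      by (intro mult_mono) (auto simp: dx_def intro: order_trans[OF _ mult_right_mono])
    also have "\<dots> \<le> norm dp * \<epsilon>" using hx unfolding dx_def by (intro mult_left_mono) auto
    finally show ?thesis .
  qed
  have n4: "norm A4 \<le> c * (\<epsilon> * norm dx)"
    unfolding A4_def using norm_cross_le[of "phat c P1" "B r x2 - B r x1 - DB r x1 *v dx"] phat_norm[OF c0, of P1] hB[folded dx_def] eps
    by (smt (verit) mult_mono mult_nonneg_nonneg norm_ge_zero)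
  have "norm ((1 / c) *\<^sub>R (A2 + A3 + A4)) = (1 / c) * norm (A2 + A3 + A4)" using c0 by simp
  also have "\<dots> \<le> (1 / c) * (\<epsilon> * norm dp * K + norm dp * \<epsilon> + c * (\<epsilon> * norm dx))"
    using n2 n3 n4 c0 norm_triangle_ineq[of "A2 + A3" A4] norm_triangle_ineq[of A2 A3]
    by (intro mult_left_mono) auto
  also have "\<dots> = (1 / c) * (\<epsilon> * norm dp * K + norm dp * \<epsilon>) + \<epsilon> * norm dx"
    using c0 by (simp add: algebra_simps)
  also have "\<dots> \<le> 1 * (\<epsilon> * norm dp * K + norm dp * \<epsilon>) + \<epsilon> * norm dx"
    using c1 eps K by (intro add_mono mult_right_mono) auto
  finally have n5: "norm ((1 / c) *\<^sub>R (A2 + A3 + A4)) \<le> \<epsilon> * norm dp * K + norm dp * \<epsilon> + \<epsilon> * norm dx" by simp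
  have "norm (A1 + (1 / c) *\<^sub>R (A2 + A3 + A4)) \<le> \<epsilon> * norm dx + (\<epsilon> * norm dp * K + norm dp * \<epsilon> + \<epsilon> * norm dx)"
    using n1 n5 norm_triangle_ineq by (smt (verit))
  also have "\<dots> \<le> (K + 2) * \<epsilon> * (norm dx + norm dp)"
  proof -
    have "0 \<le> (K - 1) * \<epsilon> * norm dx + \<epsilon> * norm dp" using K eps by simp
    moreover have "0 \<le> \<epsilon> * norm dp" "0 \<le> \<epsilon> * norm dx" using eps by simp_all
    ultimately show ?thesis by (simp add: algebra_simps)
  qed
  finally show ?thesis unfolding eq[unfolded dx_def dp_def] dx_def dp_def .
qed


lemma eq_ey: assumes s: "s \<in> {a..b}"
  shows "X b x q s - X b x p s - yv (q - p) s = - integral {s..b} (\<lambda>r. phat c (P b x q r) - phat c (P b x p r) - Ly r (zv (q - p) r))"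
proof -
  have s0: "0 \<le> s" "s \<le> b" using s ab by auto
  have c1: "continuous_on {a..b} (\<lambda>r. phat c (P b x q r) - phat c (P b x p r))" by (intro continuous_intros cont_ph)
  have "X b x q s - X b x p s = - integral {s..b} (\<lambda>r. phat c (P b x q r) - phat c (P b x p r))"
    unfolding flow_int(1)[OF fl b_in s0] int_diff[OF cont_ph cont_ph s, symmetric] by simp
  then have "X b x q s - X b x p s - yv (q - p) s = - (integral {s..b} (\<lambda>r. phat c (P b x q r) - phat c (P b x p r)) - integral {s..b} (\<lambda>r. Ly r (zv (q - p) r)))"
    unfolding eq_yv[OF s] by simp
  also have "\<dots> = - integral {s..b} (\<lambda>r. phat c (P b x q r) - phat c (P b x p r) - Ly r (zv (q - p) r))"
    by (subst int_diff[OF c1 cont_Ly[OF cont_zv] s]) simp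
  finally show ?thesis .
qed

lemma eq_ez: assumes s: "s \<in> {a..b}"
  shows "P b x q s - P b x p s - zv (q - p) s = integral {s..b} (\<lambda>r. FF c E B r (X b x q r) (P b x q r) - FF c E B r (X b x p r) (P b x p r) - Lz r (yv (q - p) r) (zv (q - p) r))"
proof -
  have s0: "0 \<le> s" "s \<le> b" using s ab by auto
  have c1: "continuous_on {a..b} (\<lambda>r. FF c E B r (X b x q r) (P b x q r) - FF c E B r (X b x p r) (P b x p r))" by (intro continuous_intros cont_FF)
  have "P b x q s - P b x p s = (q - p) + integral {s..b} (\<lambda>r. FF c E B r (X b x q r) (P b x q r) - FF c E B r (X b x p r) (P b x p r))"
    unfolding flow_int(2)[OF fl b_in s0] int_diff[OF cont_FF cont_FF s, symmetric] by simp
  then have "P b x q s - P b x p s - zv (q - p) s = integral {s..b} (\<lambda>r. FF c E B r (X b x q r) (P b x q r) - FF c E B r (X b x p r) (P b x p r)) - integral {s..b} (\<lambda>r. Lz r (yv (q - p) r) (zv (q - p) r))"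
    unfolding eq_zv[OF s] by simp
  also have "\<dots> = integral {s..b} (\<lambda>r. FF c E B r (X b x q r) (P b x q r) - FF c E B r (X b x p r) (P b x p r) - Lz r (yv (q - p) r) (zv (q - p) r))"
    by (rule int_diff[OF c1 cont_Lz[OF cont_yv cont_zv] s])
  finally show ?thesis .
qed

lemma deriv: "((\<lambda>q. X b x q a) has_derivative (\<lambda>h. yv h a)) (at p)"
proof -
  have bl: "bounded_linear (\<lambda>h. yv h a)" using lin_yv linear_conv_bounded_linear by blast
  show ?thesis unfolding has_derivative_at_alt
  proof (intro conjI bl allI impI)
    fix e :: real assume e: "e > 0"
    define \<epsilon> where "\<epsilon> = e / (4 * (K + 3))"
    have eps: "\<epsilon> > 0" using e K by (simp add: \<epsilon>_def)
    obtain R0 where R0: "R0 \<ge> 0" "\<And>r. r \<in> {a..b} \<Longrightarrow> norm (X b x p r) \<le> R0"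
      using cont_bounded_on[OF contX] by blast
    obtain R1 where R1: "R1 \<ge> 0" "\<And>r. r \<in> {a..b} \<Longrightarrow> norm (P b x p r) \<le> R1"
      using cont_bounded_on[OF contP] by blast
    define R where "R = max R0 R1 + 1"
    have cG: "continuous_on ({a..b} \<times> cball 0 R) (\<lambda>(s, P). matrix (Gm c P))"
    proof -
      have "continuous_on ({a..b} \<times> cball 0 R) (\<lambda>z. matrix (Gm c (snd z)))"
        by (rule continuous_on_compose2[OF matrix_Gm_cont[OF c0, of UNIV] continuous_on_snd]) auto
      then show ?thesis by (simp add: case_prod_beta)
    qed
    obtain \<delta>1 where d1: "\<delta>1 > 0" "\<And>s P1 P2. s \<in> {a..b} \<Longrightarrow> P1 \<in> cball 0 R \<Longrightarrow> P2 \<in> cball 0 R \<Longrightarrow> norm (P2 - P1) < \<delta>1 \<Longrightarrow>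
        norm (phat c P2 - phat c P1 - matrix (Gm c P1) *v (P2 - P1)) \<le> \<epsilon> * norm (P2 - P1)"
      using unif_rem[of "{a..b}" "\<lambda>s. phat c" "\<lambda>s P. matrix (Gm c P)" R \<epsilon>] phat_deriv_mat[OF c0] cG eps by auto
    obtain \<delta>2 where d2: "\<delta>2 > 0" "\<And>s P1 P2. s \<in> {a..b} \<Longrightarrow> P1 \<in> cball 0 R \<Longrightarrow> P2 \<in> cball 0 R \<Longrightarrow> norm (P2 - P1) < \<delta>2 \<Longrightarrow>
        norm (E s P2 - E s P1 - DE s P1 *v (P2 - P1)) \<le> \<epsilon> * norm (P2 - P1)"
      using unif_rem[of "{a..b}" E DE R \<epsilon>] W_der[OF WE] W_cont_ball[OF WE I_sub] I_sub eps by (auto simp: subset_iff)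
    obtain \<delta>3 where d3: "\<delta>3 > 0" "\<And>s P1 P2. s \<in> {a..b} \<Longrightarrow> P1 \<in> cball 0 R \<Longrightarrow> P2 \<in> cball 0 R \<Longrightarrow> norm (P2 - P1) < \<delta>3 \<Longrightarrow>
        norm (B s P2 - B s P1 - DB s P1 *v (P2 - P1)) \<le> \<epsilon> * norm (P2 - P1)"
      using unif_rem[of "{a..b}" B DB R \<epsilon>] W_der[OF WB] W_cont_ball[OF WB I_sub] I_sub eps by (auto simp: subset_iff)
    define d where "d = min (min \<delta>1 \<delta>2) (min \<delta>3 (min 1 (\<epsilon> / (18 * K)))) / 2"
    have d: "d > 0" unfolding d_def using d1 d2 d3 eps K by auto
    show "\<exists>d>0. \<forall>q. norm (q - p) < d \<longrightarrow> norm (X b x q a - X b x p a - yv (q - p) a) \<le> e * norm (q - p)"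
    proof (rule exI[of _ d], rule conjI[OF d], intro allI impI)
      fix q assume q: "norm (q - p) < d"
      define h where "h = q - p"
      have ap: "norm (X b x q r - X b x p r) + norm (P b x q r - P b x p r) \<le> 2 * norm h" if "r \<in> {a..b}" for r
        unfolding h_def by (rule apriori[OF that])
      have hd: "2 * norm h < \<delta>1" "2 * norm h < \<delta>2" "2 * norm h < \<delta>3" "2 * norm h \<le> 1" "2 * norm h \<le> \<epsilon> / (18 * K)"
        using q unfolding h_def d_def by auto
      have dx: "norm (X b x q r - X b x p r) \<le> 2 * norm h" "norm (P b x q r - P b x p r) \<le> 2 * norm h" if "r \<in> {a..b}" for r
        using ap[OF that] norm_ge_zero[of "X b x q r - X b x p r"] norm_ge_zero[of "P b x q r - P b x p r"] by linarith+
      have balls: "X b x p r \<in> cball 0 R" "X b x q r \<in> cball 0 R" "P b x p r \<in> cball 0 R" "P b x q r \<in> cball 0 R"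
        if "r \<in> {a..b}" for r
      proof -
        show "X b x p r \<in> cball 0 R" using R0(2)[OF that] unfolding R_def by simp
        show "P b x p r \<in> cball 0 R" using R1(2)[OF that] unfolding R_def by simp
        have "norm (X b x q r) \<le> norm (X b x p r) + norm (X b x q r - X b x p r)" by (rule norm_triangle_sub)
        then show "X b x q r \<in> cball 0 R" using R0(2)[OF that] dx(1)[OF that] hd(4) unfolding R_def by simp
        have "norm (P b x q r) \<le> norm (P b x p r) + norm (P b x q r - P b x p r)" by (rule norm_triangle_sub)
        then show "P b x q r \<in> cball 0 R" using R1(2)[OF that] dx(2)[OF that] hd(4) unfolding R_def by simp
      qed
      define ey where "ey r = X b x q r - X b x p r - yv h r" for r
      define ez where "ez r = P b x q r - P b x p r - zv h r" for r
      define ue where "ue r = norm (ey r) + norm (ez r)" for r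
      have cue: "continuous_on {a..b} ue" unfolding ue_def ey_def ez_def
        by (intro continuous_intros contX contP cont_yv cont_zv)
      have k: "0 \<le> 19 * K * (b - a)" "19 * K * (b - a) \<le> 1/2" using K ab smallK by (auto simp: algebra_simps)
      have A0: "0 \<le> (b - a) * (2 * (K + 3) * \<epsilon> * norm h)" using ab K eps by simp
      have "ue a \<le> 2 * ((b - a) * (2 * (K + 3) * \<epsilon> * norm h))"
      proof (rule boot[OF _ cue A0 k])
        show "a \<le> b" "a \<in> {a..b}" using ab by auto
        fix M s assume M: "\<And>r. r \<in> {a..b} \<Longrightarrow> ue r \<le> M" and s: "s \<in> {a..b}"
        have M0: "0 \<le> M" using M[of a] ab unfolding ue_def by (smt (verit) atLeastAtMost_iff norm_ge_zero)
        have g1: "norm (phat c (P b x q r) - phat c (P b x p r) - Ly r (zv h r)) \<le> 2 * \<epsilon> * norm h + M"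
          if r: "r \<in> {a..b}" for r
        proof -
          have eqg: "phat c (P b x q r) - phat c (P b x p r) - Ly r (zv h r) =
             (phat c (P b x q r) - phat c (P b x p r) - matrix (Gm c (P b x p r)) *v (P b x q r - P b x p r)) + Gm c (P b x p r) (ez r)"
            unfolding ez_def Ly_def matrix_vector_mul(2)[OF linear_Gm] linear_diff[OF linear_Gm] by simp
          moreover have "norm (phat c (P b x q r) - phat c (P b x p r) - matrix (Gm c (P b x p r)) *v (P b x q r - P b x p r)) \<le> \<epsilon> * (2 * norm h)"
            using d1(2)[OF r balls(3)[OF r] balls(4)[OF r]] dx(2)[OF r] hd(1) eps
            by (smt (verit) mult_left_mono)
          moreover have "norm (Gm c (P b x p r) (ez r)) \<le> M"
            using Gm_norm1[OF c0, of "P b x p r" "ez r"] M[OF r] norm_ge_zero[of "ey r"] unfolding ue_def by linarith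
          ultimately show ?thesis unfolding eqg
            using norm_triangle_ineq[of "phat c (P b x q r) - phat c (P b x p r) - matrix (Gm c (P b x p r)) *v (P b x q r - P b x p r)" "Gm c (P b x p r) (ez r)"]
            by linarith
        qed
        have g2: "norm (FF c E B r (X b x q r) (P b x q r) - FF c E B r (X b x p r) (P b x p r) - Lz r (yv h r) (zv h r))
            \<le> (K + 2) * \<epsilon> * (2 * norm h) + 18 * K * M"
          if r: "r \<in> {a..b}" for r
        proof -
          have rT: "r \<in> {0..T}" using r I_sub by auto
          have hx: "9 * K * norm (X b x q r - X b x p r) \<le> \<epsilon>"
          proof -
            have "9 * K * norm (X b x q r - X b x p r) \<le> 9 * K * (\<epsilon> / (18 * K))"
              using dx(1)[OF r] hd(5) K by (intro mult_left_mono) auto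
            also have "\<dots> \<le> \<epsilon>" using K eps by simp
            finally show ?thesis .
          qed
          have rr: "norm (FF c E B r (X b x q r) (P b x q r) - FF c E B r (X b x p r) (P b x p r) - Lz r (X b x q r - X b x p r) (P b x q r - P b x p r))
             \<le> (K + 2) * \<epsilon> * (norm (X b x q r - X b x p r) + norm (P b x q r - P b x p r))"
            unfolding Lz_def Lz1_def Lz2_def
          proof (rule rho2[OF rT _ _ _ _ hx])
            show "0 \<le> \<epsilon>" using eps by simp
            show "norm (E r (X b x q r) - E r (X b x p r) - DE r (X b x p r) *v (X b x q r - X b x p r)) \<le> \<epsilon> * norm (X b x q r - X b x p r)"
              using d2(2)[OF r balls(1)[OF r] balls(2)[OF r]] dx(1)[OF r] hd(2) by simp
            show "norm (B r (X b x q r) - B r (X b x p r) - DB r (X b x p r) *v (X b x q r - X b x p r)) \<le> \<epsilon> * norm (X b x q r - X b x p r)"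
              using d3(2)[OF r balls(1)[OF r] balls(2)[OF r]] dx(1)[OF r] hd(3) by simp
            show "norm (phat c (P b x q r) - phat c (P b x p r) - Gm c (P b x p r) (P b x q r - P b x p r)) \<le> \<epsilon> * norm (P b x q r - P b x p r)"
              using d1(2)[OF r balls(3)[OF r] balls(4)[OF r]] dx(2)[OF r] hd(1)
              unfolding matrix_vector_mul(2)[OF linear_Gm] by simp
          qed
          also have "\<dots> \<le> (K + 2) * \<epsilon> * (2 * norm h)" using ap[OF r] K eps by (intro mult_left_mono) auto
          finally have rr2: "norm (FF c E B r (X b x q r) (P b x q r) - FF c E B r (X b x p r) (P b x p r) - Lz r (X b x q r - X b x p r) (P b x q r - P b x p r)) \<le> (K + 2) * \<epsilon> * (2 * norm h)" .
          have "norm (Lz r (ey r) (ez r)) \<le> 18 * K * M"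
          proof -
            have "18 * K * (norm (ey r) + norm (ez r)) \<le> 18 * K * M" using M[OF r] K unfolding ue_def by (intro mult_left_mono) auto
            then show ?thesis using Lz_bnd[OF rT, of "ey r" "ez r"] by linarith
          qed
          moreover have eqg: "FF c E B r (X b x q r) (P b x q r) - FF c E B r (X b x p r) (P b x p r) - Lz r (yv h r) (zv h r) =
            (FF c E B r (X b x q r) (P b x q r) - FF c E B r (X b x p r) (P b x p r) - Lz r (X b x q r - X b x p r) (P b x q r - P b x p r)) + Lz r (ey r) (ez r)"
            unfolding ey_def ez_def Lz_diff[symmetric] by simp
          ultimately show ?thesis unfolding eqg
            using rr2 norm_triangle_ineq[of "FF c E B r (X b x q r) (P b x q r) - FF c E B r (X b x p r) (P b x p r) - Lz r (X b x q r - X b x p r) (P b x q r - P b x p r)" "Lz r (ey r) (ez r)"]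
            by linarith
        qed
        have n1: "norm (ey s) \<le> (b - a) * (2 * \<epsilon> * norm h + M)"
          unfolding ey_def h_def eq_ey[OF s] norm_minus_cancel
          by (rule int_bnd[OF _ s]) (use g1 M0 eps h_def in \<open>auto intro!: continuous_intros cont_ph cont_Ly cont_zv\<close>)
        have n2: "norm (ez s) \<le> (b - a) * ((K + 2) * \<epsilon> * (2 * norm h) + 18 * K * M)"
          unfolding ez_def h_def eq_ez[OF s]
          by (rule int_bnd[OF _ s]) (use g2 M0 eps K h_def in \<open>auto intro!: continuous_intros cont_FF cont_Lz cont_yv cont_zv\<close>)
        have "ue s \<le> (b - a) * (2 * \<epsilon> * norm h + M) + (b - a) * ((K + 2) * \<epsilon> * (2 * norm h) + 18 * K * M)"
          unfolding ue_def using n1 n2 by simp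
        also have "\<dots> \<le> (b - a) * (2 * (K + 3) * \<epsilon> * norm h) + 19 * K * (b - a) * M"
        proof -
          have "(b - a) * M \<le> K * (b - a) * M"
          proof -
            have "1 * (b - a) \<le> K * (b - a)" using K ab by (intro mult_right_mono) auto
            then show ?thesis using M0 by (intro mult_right_mono) auto
          qed
          then show ?thesis by (simp add: algebra_simps)
        qed
        finally show "ue s \<le> (b - a) * (2 * (K + 3) * \<epsilon> * norm h) + 19 * K * (b - a) * M" .
      qed
      also have "\<dots> \<le> 4 * (K + 3) * \<epsilon> * norm h"
      proof -
        have "(b - a) * (2 * (K + 3) * \<epsilon> * norm h) \<le> 1 * (2 * (K + 3) * \<epsilon> * norm h)"
          using ba_small K eps by (intro mult_right_mono) auto
        moreover have "4 * (K + 3) * \<epsilon> * norm h = 2 * (2 * (K + 3) * \<epsilon> * norm h)" by simp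
        ultimately show ?thesis by linarith
      qed
      also have "\<dots> = e * norm h" unfolding \<epsilon>_def using K by simp
      finally have "ue a \<le> e * norm h" .
      then show "norm (X b x q a - X b x p a - yv (q - p) a) \<le> e * norm (q - p)"
        using norm_ge_zero[of "ez a"] unfolding ue_def ey_def h_def by linarith
    qed
  qed
qed

end



context inst begin

lemma lin_Rm: "linear (Rm c p)" by (rule linear_Rm)
lemma lin_Sm: "linear (Sm c p)" unfolding Sm_def by (rule linear_Lf)
lemma bl_Rm: "bounded_linear (Rm c p)" unfolding Rm_def by (rule bounded_linear_Lf)
lemma bl_Sm: "bounded_linear (Sm c p)" unfolding Sm_def by (rule bounded_linear_Lf)

lemma Pdev: assumes r: "r \<in> {a..b}" shows "norm (P b x p r - p) \<le> 1 / 300"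
proof -
  have r0: "0 \<le> r" "r \<le> b" using r ab by auto
  have "P b x p r - p = integral {r..b} (\<lambda>s. FF c E B s (X b x p s) (P b x p s))"
    using flow_int(2)[OF fl b_in r0, of x p] by simp
  also have "norm \<dots> \<le> (b - a) * (2 * K)"
  proof (rule int_bnd[OF cont_FF r])
    fix s assume s: "s \<in> {a..b}"
    have "norm (FF c E B s (X b x p s) (P b x p s)) \<le> 2 * C0" using FF_bnd[OF c1 WE WB] s I_sub by blast
    then show "norm (FF c E B s (X b x p s) (P b x p s)) \<le> 2 * K" using K by linarith
  qed (use K in auto)
  also have "\<dots> \<le> 1 / 300" using smallK by (simp add: algebra_simps)
  finally show ?thesis .
qed

lemma Hb: assumes r: "r \<in> {a..b}"
  shows "norm (Rm c p (Gm c (P b x p r) (Rm c p w)) - w) \<le> norm w / 50"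
  by (rule Hbound[OF c1 Pdev[OF r]]) auto

lemma Hb2: assumes r: "r \<in> {a..b}"
  shows "norm (Rm c p (Gm c (P b x p r) (Rm c p w))) \<le> 2 * norm w"
  using Hb[OF r, of w] norm_triangle_ineq2[of "Rm c p (Gm c (P b x p r) (Rm c p w))" w] norm_ge_zero[of w] by linarith

lemma scaled: "norm (Rm c p (yv (Rm c p v) a) + (b - a) *\<^sub>R v) \<le> (b - a) / 20 * norm v"
proof -
  define h where "h = Rm c p v"
  define yt where "yt r = Rm c p (yv h r)" for r
  define zt where "zt r = Sm c p (zv h r)" for r
  have cyt: "continuous_on {a..b} yt" unfolding yt_def
    by (rule continuous_on_compose2[OF linear_continuous_on[OF bl_Rm] cont_yv]) auto
  have czt: "continuous_on {a..b} zt" unfolding zt_def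
    by (rule continuous_on_compose2[OF linear_continuous_on[OF bl_Sm] cont_zv]) auto
  have zvR: "zv h r = Rm c p (zt r)" for r unfolding zt_def by (simp add: RS[OF c0])
  have yvS: "yv h r = Sm c p (yt r)" for r unfolding yt_def by (simp add: SR[OF c0])
  define H where "H r w = Rm c p (Gm c (P b x p r) (Rm c p w))" for r w
  have cH: "continuous_on {a..b} (\<lambda>r. H r (zt r))"
  proof -
    have eqH: "(\<lambda>r. H r (zt r)) = (\<lambda>r. Rm c p (Ly r (zv h r)))" unfolding H_def Ly_def zvR ..
    show ?thesis unfolding eqH
      by (rule continuous_on_compose2[OF linear_continuous_on[OF bl_Rm] cont_Ly[OF cont_zv]]) auto
  qed
  have eyt: "yt s = - integral {s..b} (\<lambda>r. H r (zt r))" if s: "s \<in> {a..b}" for s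
  proof -
    have "yt s = Rm c p (- integral {s..b} (\<lambda>r. Ly r (zv h r)))" unfolding yt_def eq_yv[OF s] ..
    also have "\<dots> = - Rm c p (integral {s..b} (\<lambda>r. Ly r (zv h r)))" using linear_neg[OF lin_Rm] by simp
    also have "Rm c p (integral {s..b} (\<lambda>r. Ly r (zv h r))) = integral {s..b} (Rm c p \<circ> (\<lambda>r. Ly r (zv h r)))"
      by (rule integral_linear[symmetric, OF integrable_sub[OF cont_Ly[OF cont_zv] s] bl_Rm])
    also have "(Rm c p \<circ> (\<lambda>r. Ly r (zv h r))) = (\<lambda>r. H r (zt r))" unfolding H_def Ly_def zvR o_def ..
    finally show ?thesis .
  qed
  define G where "G r = Sm c p (Lz r (yv h r) (zv h r))" for r
  have cG: "continuous_on {a..b} G" unfolding G_def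
    by (rule continuous_on_compose2[OF linear_continuous_on[OF bl_Sm] cont_Lz[OF cont_yv cont_zv]]) auto
  have ezt: "zt s = v + integral {s..b} G" if s: "s \<in> {a..b}" for s
  proof -
    have "zt s = Sm c p (h + integral {s..b} (\<lambda>r. Lz r (yv h r) (zv h r)))" unfolding zt_def eq_zv[OF s] ..
    also have "\<dots> = Sm c p h + Sm c p (integral {s..b} (\<lambda>r. Lz r (yv h r) (zv h r)))" using linear_add[OF lin_Sm] by simp
    also have "Sm c p h = v" unfolding h_def by (rule SR[OF c0])
    also have "Sm c p (integral {s..b} (\<lambda>r. Lz r (yv h r) (zv h r))) = integral {s..b} (Sm c p \<circ> (\<lambda>r. Lz r (yv h r) (zv h r)))"
      by (rule integral_linear[symmetric, OF integrable_sub[OF cont_Lz[OF cont_yv cont_zv] s] bl_Sm])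
    also have "(Sm c p \<circ> (\<lambda>r. Lz r (yv h r) (zv h r))) = G" unfolding G_def o_def ..
    finally show ?thesis .
  qed
  have Gb: "norm (G r) \<le> 18 * K * norm (yt r) + 2 * K * norm (zt r)" if r: "r \<in> {a..b}" for r
  proof -
    have rT: "r \<in> {0..T}" using r I_sub by auto
    have "norm (G r) \<le> norm (Lz r (yv h r) (zv h r))" unfolding G_def by (rule S_norm[OF c0])
    also have "\<dots> \<le> 18 * K * norm (yv h r) + K * norm (Gm c (P b x p r) (zv h r))" by (rule Lz_bnd_fine[OF rT])
    also have "\<dots> \<le> 18 * K * norm (yt r) + K * (2 * norm (zt r))"
    proof (intro add_mono mult_left_mono)
      show "norm (yv h r) \<le> norm (yt r)" unfolding yvS by (rule S_norm[OF c0])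
      have "Gm c (P b x p r) (zv h r) = Sm c p (H r (zt r))" unfolding H_def zvR by (simp add: SR[OF c0])
      then have "norm (Gm c (P b x p r) (zv h r)) \<le> norm (H r (zt r))" using S_norm[OF c0] by simp
      also have "\<dots> \<le> 2 * norm (zt r)" unfolding H_def by (rule Hb2[OF r])
      finally show "norm (Gm c (P b x p r) (zv h r)) \<le> 2 * norm (zt r)" .
    qed (use K in auto)
    finally show ?thesis by simp
  qed
  have ab1: "b - a \<le> 1" using ba_small by simp
  have zb: "norm (zt s) \<le> 2 * norm v" if s: "s \<in> {a..b}" for s
  proof (rule boot[OF _ continuous_on_norm[OF czt] _ _ _ _ s])
    show "a \<le> b" using ab by simp
    show "0 \<le> norm v" by simp
    show "0 \<le> 38 * K * (b - a)" using K ab by simp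
    show "38 * K * (b - a) \<le> 1/2" using smallK by (simp add: algebra_simps)
    fix M s assume M: "\<And>r. r \<in> {a..b} \<Longrightarrow> norm (zt r) \<le> M" and s: "s \<in> {a..b}"
    have M0: "0 \<le> M" using M[of a] ab by (smt (verit) atLeastAtMost_iff norm_ge_zero)
    have yb: "norm (yt r) \<le> (b - a) * (2 * M)" if r: "r \<in> {a..b}" for r
      unfolding eyt[OF r] norm_minus_cancel
    proof (rule int_bnd[OF cH r])
      fix r' assume r': "r' \<in> {a..b}"
      show "norm (H r' (zt r')) \<le> 2 * M" unfolding H_def using Hb2[OF r', of "zt r'"] M[OF r'] by simp
    qed (use M0 in simp)
    have "norm (integral {s..b} G) \<le> (b - a) * (18 * K * ((b - a) * (2 * M)) + 2 * K * M)"
    proof (rule int_bnd[OF cG s])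
      fix r assume r: "r \<in> {a..b}"
      have "18 * K * norm (yt r) \<le> 18 * K * ((b - a) * (2 * M))" using yb[OF r] K by (intro mult_left_mono) auto
      moreover have "2 * K * norm (zt r) \<le> 2 * K * M" using M[OF r] K by (intro mult_left_mono) auto
      ultimately show "norm (G r) \<le> 18 * K * ((b - a) * (2 * M)) + 2 * K * M" using Gb[OF r] by linarith
    qed (use K M0 ab in simp)
    also have "\<dots> \<le> (b - a) * (38 * K * M)"
    proof (intro mult_left_mono)
      have "18 * K * ((b - a) * (2 * M)) \<le> 18 * K * (1 * (2 * M))"
        using ab1 K M0 by (intro mult_left_mono mult_right_mono) auto
      moreover have "18 * K * (1 * (2 * M)) + 2 * K * M = 38 * K * M" by simp
      ultimately show "18 * K * ((b - a) * (2 * M)) + 2 * K * M \<le> 38 * K * M" by linarith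
    qed (use ab in simp)
    finally have "norm (integral {s..b} G) \<le> (b - a) * (38 * K * M)" .
    then show "norm (zt s) \<le> norm v + 38 * K * (b - a) * M"
      unfolding ezt[OF s] using norm_triangle_ineq[of v "integral {s..b} G"] by (simp add: algebra_simps)
  qed
  have yb2: "norm (yt r) \<le> 4 * norm v" if r: "r \<in> {a..b}" for r
  proof -
    have "norm (yt r) \<le> (b - a) * (4 * norm v)"
      unfolding eyt[OF r] norm_minus_cancel
    proof (rule int_bnd[OF cH r])
      fix r' assume r': "r' \<in> {a..b}"
      show "norm (H r' (zt r')) \<le> 4 * norm v" unfolding H_def using Hb2[OF r', of "zt r'"] zb[OF r'] by simp
    qed simp
    also have "\<dots> \<le> 1 * (4 * norm v)" using ab1 by (intro mult_right_mono) auto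
    finally show ?thesis by simp
  qed
  have zv_dev: "norm (zt r - v) \<le> 76 * K * (b - a) * norm v" if r: "r \<in> {a..b}" for r
  proof -
    have "norm (zt r - v) = norm (integral {r..b} G)" unfolding ezt[OF r] by simp
    also have "\<dots> \<le> (b - a) * (76 * K * norm v)"
    proof (rule int_bnd[OF cG r])
      fix r' assume r': "r' \<in> {a..b}"
      have "18 * K * norm (yt r') \<le> 18 * K * (4 * norm v)" using yb2[OF r'] K by (intro mult_left_mono) auto
      moreover have "2 * K * norm (zt r') \<le> 2 * K * (2 * norm v)" using zb[OF r'] K by (intro mult_left_mono) auto
      ultimately show "norm (G r') \<le> 76 * K * norm v" using Gb[OF r'] by linarith
    qed (use K in simp)
    finally show ?thesis by (simp add: algebra_simps)
  qed
  have fin: "norm (H r (zt r) - v) \<le> norm v / 20" if r: "r \<in> {a..b}" for r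
  proof -
    have "norm (H r (zt r) - v) \<le> norm (H r (zt r) - zt r) + norm (zt r - v)"
      using norm_triangle_ineq[of "H r (zt r) - zt r" "zt r - v"] by simp
    also have "\<dots> \<le> 2 * norm v / 50 + 76 * K * (b - a) * norm v"
      using Hb[OF r, of "zt r"] zb[OF r] zv_dev[OF r] unfolding H_def by simp
    also have "\<dots> \<le> norm v / 20"
    proof -
      have "76 * K * (b - a) * norm v \<le> 76 * (1 / 10000) * norm v"
        using smallK by (intro mult_right_mono) (auto simp: algebra_simps)
      then show ?thesis using norm_ge_zero[of v] by linarith
    qed
    finally show ?thesis .
  qed
  have a_in: "a \<in> {a..b}" using ab by simp
  have "yt a + (b - a) *\<^sub>R v = - (integral {a..b} (\<lambda>r. H r (zt r)) - integral {a..b} (\<lambda>r. v))"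
    unfolding eyt[OF a_in] using ab by simp
  also have "integral {a..b} (\<lambda>r. H r (zt r)) - integral {a..b} (\<lambda>r. v) = integral {a..b} (\<lambda>r. H r (zt r) - v)"
    by (rule int_diff[OF cH continuous_on_const a_in])
  finally have "norm (yt a + (b - a) *\<^sub>R v) = norm (integral {a..b} (\<lambda>r. H r (zt r) - v))" by simp
  also have "\<dots> \<le> (b - a) * (norm v / 20)"
    by (rule int_bnd[OF _ a_in]) (use fin in \<open>auto intro!: continuous_intros cH\<close>)
  finally show ?thesis unfolding yt_def h_def by simp
qed

end



context inst begin

lemma final: "\<exists>J. ((\<lambda>q. X b x q a) has_derivative J) (at p) \<and>
   c ^ 5 / (2 * pzero c p ^ 5) * \<bar>b - a\<bar> ^ 3 \<le> \<bar>det (matrix J)\<bar> \<and>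
   \<bar>det (matrix J)\<bar> \<le> 2 * c ^ 5 / pzero c p ^ 5 * \<bar>b - a\<bar> ^ 3"
proof (intro exI conjI)
  define J where "J = (\<lambda>h. yv h a)"
  show der: "((\<lambda>q. X b x q a) has_derivative J) (at p)" unfolding J_def by (rule deriv)
  have lJ: "linear J" unfolding J_def by (rule lin_yv)
  define d where "d = b - a"
  have d0: "d \<ge> 0" unfolding d_def using ab by simp
  define M where "M = matrix (Rm c p \<circ> J \<circ> Rm c p)"
  have l1: "linear (J \<circ> Rm c p)" by (rule linear_compose[OF lin_Rm lJ])
  have Meq: "M = matrix (Rm c p) ** matrix J ** matrix (Rm c p)"
    unfolding M_def o_assoc[symmetric] matrix_compose[OF l1 lin_Rm] matrix_compose[OF lin_Rm lJ]
    by (simp add: matrix_mul_assoc)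
  have entries: "\<bar>M $ i $ j + (if i = j then d else 0)\<bar> \<le> d / 20" for i j
  proof -
    have "M $ i $ j = Rm c p (J (Rm c p (axis j 1))) $ i" unfolding M_def matrix_def by simp
    then have "M $ i $ j + (if i = j then d else 0) = (Rm c p (yv (Rm c p (axis j 1)) a) + (b - a) *\<^sub>R axis j 1) $ i"
      unfolding J_def d_def by (simp add: axis_comp)
    then have "\<bar>M $ i $ j + (if i = j then d else 0)\<bar> \<le> norm (Rm c p (yv (Rm c p (axis j 1)) a) + (b - a) *\<^sub>R axis j 1)"
      using component_le_norm_cart by metis
    also have "\<dots> \<le> (b - a) / 20 * norm (axis j (1::real) :: real^3)" by (rule scaled)
    finally show ?thesis unfolding d_def by simp
  qed
  have dp: "d ^ 3 / 2 \<le> \<bar>det M\<bar> \<and> \<bar>det M\<bar> \<le> 2 * d ^ 3" by (rule det_pert[OF d0 entries])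
  have dR: "(det (matrix (Rm c p)))\<^sup>2 = (pzero c p / c) ^ 5" by (rule det_Rm[OF c0])
  have a0: "pzero c p > 0" using pzero_pos[OF c0] .
  have detM: "\<bar>det M\<bar> = (pzero c p / c) ^ 5 * \<bar>det (matrix J)\<bar>"
    unfolding Meq det_mul dR[symmetric] by (simp add: abs_mult power2_eq_square)
  define q where "q = (c / pzero c p) ^ 5"
  have q0: "q > 0" unfolding q_def using a0 c0 by simp
  have dJ: "\<bar>det (matrix J)\<bar> = q * \<bar>det M\<bar>"
    unfolding detM q_def using a0 c0 by (simp add: power_divide field_simps)
  have ad: "\<bar>b - a\<bar> = d" unfolding d_def using ab by simp
  have e1: "c ^ 5 / (2 * pzero c p ^ 5) * \<bar>b - a\<bar> ^ 3 = q * (d ^ 3 / 2)"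
    unfolding ad q_def using a0 by (simp add: power_divide)
  have e2: "2 * c ^ 5 / pzero c p ^ 5 * \<bar>b - a\<bar> ^ 3 = q * (2 * d ^ 3)"
    unfolding ad q_def using a0 by (simp add: power_divide)
  show "c ^ 5 / (2 * pzero c p ^ 5) * \<bar>b - a\<bar> ^ 3 \<le> \<bar>det (matrix J)\<bar>"
    unfolding e1 dJ using dp q0 by (intro mult_left_mono) auto
  show "\<bar>det (matrix J)\<bar> \<le> 2 * c ^ 5 / pzero c p ^ 5 * \<bar>b - a\<bar> ^ 3"
    unfolding e2 dJ using dp q0 by (intro mult_left_mono) auto
qed

end



theorem lemma5p1:
  fixes T C0 :: real
  assumes "T > 0"
  shows "\<exists>Tbar C1 C2. 0 < Tbar \<and> Tbar \<le> T \<and> C1 > 0 \<and> C2 > 0 \<and>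
    (\<forall>(c::real) E B DE DB X P.
       c \<ge> 1 \<longrightarrow> W1inf_field T C0 E DE \<longrightarrow> W1inf_field T C0 B DB \<longrightarrow>
       is_characteristic_flow c T E B X P \<longrightarrow>
       (\<forall>t \<tau> x p. 0 \<le> \<tau> \<and> \<tau> \<le> t \<and> t \<le> Tbar \<longrightarrow>
          (\<exists>J. ((\<lambda>q. X t x q \<tau>) has_derivative J) (at p) \<and>
             C1 * (c ^ 5 / (2 * pzero c p ^ 5) * \<bar>t - \<tau>\<bar> ^ 3) \<le> \<bar>det (matrix J)\<bar> \<and>
             \<bar>det (matrix J)\<bar> \<le> C2 * (2 * c ^ 5 / pzero c p ^ 5 * \<bar>t - \<tau>\<bar> ^ 3))))"
proof -
  define Tb where "Tb = min T (1 / (10000 * (\<bar>C0\<bar> + 1)))"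
  have Tb: "0 < Tb" "Tb \<le> T" unfolding Tb_def using assms by (auto simp: add_pos_nonneg)
  have Tb2: "Tb * (\<bar>C0\<bar> + 1) \<le> 1 / 10000"
  proof -
    have "Tb \<le> 1 / (10000 * (\<bar>C0\<bar> + 1))" unfolding Tb_def by simp
    then have "Tb * (\<bar>C0\<bar> + 1) \<le> 1 / (10000 * (\<bar>C0\<bar> + 1)) * (\<bar>C0\<bar> + 1)"
      by (intro mult_right_mono) auto
    also have "\<dots> = 1 / 10000" by (simp add: add_pos_nonneg)
    finally show ?thesis .
  qed
  have main: "\<forall>(c::real) E B DE DB X P.
       c \<ge> 1 \<longrightarrow> W1inf_field T C0 E DE \<longrightarrow> W1inf_field T C0 B DB \<longrightarrow>
       is_characteristic_flow c T E B X P \<longrightarrow>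
       (\<forall>t \<tau> x p. 0 \<le> \<tau> \<and> \<tau> \<le> t \<and> t \<le> Tb \<longrightarrow>
          (\<exists>J. ((\<lambda>q. X t x q \<tau>) has_derivative J) (at p) \<and>
             1 * (c ^ 5 / (2 * pzero c p ^ 5) * \<bar>t - \<tau>\<bar> ^ 3) \<le> \<bar>det (matrix J)\<bar> \<and>
             \<bar>det (matrix J)\<bar> \<le> 1 * (2 * c ^ 5 / pzero c p ^ 5 * \<bar>t - \<tau>\<bar> ^ 3)))"
  proof (intro allI impI)
    fix c E B DE DB X P t \<tau> x p
    assume c: "(c::real) \<ge> 1" and WE: "W1inf_field T C0 E DE" and WB: "W1inf_field T C0 B DB"
      and fl: "is_characteristic_flow c T E B X P"
      and tt: "0 \<le> \<tau> \<and> \<tau> \<le> t \<and> t \<le> Tb"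
    have sm: "(t - \<tau>) * (\<bar>C0\<bar> + 1) \<le> 1 / 10000"
    proof -
      have "(t - \<tau>) * (\<bar>C0\<bar> + 1) \<le> Tb * (\<bar>C0\<bar> + 1)" using tt by (intro mult_right_mono) auto
      then show ?thesis using Tb2 by linarith
    qed
    interpret I: inst c T C0 E B DE DB X P \<tau> t x p
      by unfold_locales (use c WE WB fl tt Tb sm in auto)
    show "\<exists>J. ((\<lambda>q. X t x q \<tau>) has_derivative J) (at p) \<and>
             1 * (c ^ 5 / (2 * pzero c p ^ 5) * \<bar>t - \<tau>\<bar> ^ 3) \<le> \<bar>det (matrix J)\<bar> \<and>
             \<bar>det (matrix J)\<bar> \<le> 1 * (2 * c ^ 5 / pzero c p ^ 5 * \<bar>t - \<tau>\<bar> ^ 3)"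
      using I.final by simp
  qed
  show ?thesis using Tb main by (intro exI[of _ Tb] exI[of _ "1::real"] conjI) auto
qed


end
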